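(* Let $p\in[1,\infty]$ and let $H:\ell^p(\mathbb{Z})\to\ell^p(\mathbb{Z})$ be given by $(Hx)_n=x_{n+1}+x_{n-1}+v(n)x_n$, where $v:\mathbb{Z}\to\mathbb{Z}$ is $K$-periodic for some $K\in\mathbb{N}$. Then the following are equivalent: (i) the finite section method for $H$ is applicable; (ii) the monodromy matrix $M(0)$ of $H$ satisfies $|\operatorname{tr}(M(0))|>2$.
   Context: For $E\in\mathbb{R}$, transfer matrices $T(n,E)=\begin{pmatrix}E-v(n)&-1\\1&0\end{pmatrix}$ and monodromy matrix $M(E)=T(K-1,E)\cdots T(1,E)T(0,E)$. Finite section method (FSM): for a bounded operator $A$ on $\ell^p(\mathbb{Z})$ with matrix $(a_{ij})_{i,j\in\mathbb{Z}}$, let $A_n=(a_{ij})_{i,j=-n}^n$; the FSM is applicable if $A$ is invertible, $A_n$ are invertible for all sufficiently large $n$, and their inverses (embedded into two-sided infinite matrices) converge strongly to $A^{-1}$. *)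

theory Defs
  imports "HOL-Analysis.Analysis"
begin

definition lp_space :: "ereal \<Rightarrow> (int \<Rightarrow> complex) set" where
  "lp_space p = (if p = \<infinity> then {x. bounded (range x)}
                 else {x. (\<lambda>k. norm (x k) powr real_of_ereal p) summable_on UNIV})"

definition lp_norm :: "ereal \<Rightarrow> (int \<Rightarrow> complex) \<Rightarrow> real" where
  "lp_norm p x = (if p = \<infinity> then (SUP k. norm (x k))
                  else (\<Sum>\<^sub>\<infinity>k. norm (x k) powr real_of_ereal p) powr (1 / real_of_ereal p))"

definition schroedinger :: "(int \<Rightarrow> int) \<Rightarrow> (int \<Rightarrow> complex) \<Rightarrow> (int \<Rightarrow> complex)" where
  "schroedinger v x = (\<lambda>n. x (n + 1) + x (n - 1) + of_int (v n) * x n)"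

definition proj :: "nat \<Rightarrow> (int \<Rightarrow> complex) \<Rightarrow> (int \<Rightarrow> complex)" where
  "proj n x = (\<lambda>k. if \<bar>k\<bar> \<le> int n then x k else 0)"

definition fs_dom :: "nat \<Rightarrow> (int \<Rightarrow> complex) set" where
  "fs_dom n = {x. \<forall>k. int n < \<bar>k\<bar> \<longrightarrow> x k = 0}"

text \<open>The finite section A_n = (a_ij), i,j = -n..n, of the operator A, acting on
fs_dom n (this is exactly the matrix A_n; a_ij = (A e_j)_i).\<close>
definition finite_section ::
  "((int \<Rightarrow> complex) \<Rightarrow> (int \<Rightarrow> complex)) \<Rightarrow> nat \<Rightarrow> (int \<Rightarrow> complex) \<Rightarrow> (int \<Rightarrow> complex)" where
  "finite_section A n x = proj n (A (proj n x))"

definition fs_invertible :: "((int \<Rightarrow> complex) \<Rightarrow> (int \<Rightarrow> complex)) \<Rightarrow> nat \<Rightarrow> bool" where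
  "fs_invertible A n \<longleftrightarrow> bij_betw (finite_section A n) (fs_dom n) (fs_dom n)"

text \<open>The inverse of A_n embedded into a two-sided infinite matrix (zeros elsewhere).\<close>
definition fs_inverse_embedded ::
  "((int \<Rightarrow> complex) \<Rightarrow> (int \<Rightarrow> complex)) \<Rightarrow> nat \<Rightarrow> (int \<Rightarrow> complex) \<Rightarrow> (int \<Rightarrow> complex)" where
  "fs_inverse_embedded A n x = inv_into (fs_dom n) (finite_section A n) (proj n x)"

text \<open>A bounded operator A on l^p is invertible: it is a bounded linear bijection of
l^p onto itself (the inverse is then bounded by the open mapping theorem).\<close>
definition lp_bounded_linear :: "ereal \<Rightarrow> ((int \<Rightarrow> complex) \<Rightarrow> (int \<Rightarrow> complex)) \<Rightarrow> bool" where
  "lp_bounded_linear p A \<longleftrightarrow>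
     (\<forall>x y. A (\<lambda>k. x k + y k) = (\<lambda>k. A x k + A y k)) \<and>
     (\<forall>c x. A (\<lambda>k. c * x k) = (\<lambda>k. c * A x k)) \<and> A ` lp_space p \<subseteq> lp_space p \<and>
     (\<exists>C. \<forall>x\<in>lp_space p. lp_norm p (A x) \<le> C * lp_norm p x)"

definition lp_invertible :: "ereal \<Rightarrow> ((int \<Rightarrow> complex) \<Rightarrow> (int \<Rightarrow> complex)) \<Rightarrow> bool" where
  "lp_invertible p A \<longleftrightarrow> lp_bounded_linear p A \<and> bij_betw A (lp_space p) (lp_space p)"

text \<open>For p = infinity, where P_n does not converge strongly
to the identity, the standard convention (P-strong convergence) is used:
||P_m (B_n - B)|| -> 0 and ||(B_n - B) P_m|| -> 0 for every m.\<close>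
definition strongly_converges ::
  "ereal \<Rightarrow> (nat \<Rightarrow> (int \<Rightarrow> complex) \<Rightarrow> (int \<Rightarrow> complex)) \<Rightarrow> ((int \<Rightarrow> complex) \<Rightarrow> (int \<Rightarrow> complex)) \<Rightarrow> bool" where
  "strongly_converges p Bs B \<longleftrightarrow>
     (if p = \<infinity> then
        (\<forall>m. \<forall>\<epsilon>>0. \<forall>\<^sub>F n in sequentially. \<forall>x\<in>lp_space p. lp_norm p x \<le> 1 \<longrightarrow>
            lp_norm p (proj m (\<lambda>k. Bs n x k - B x k)) \<le> \<epsilon> \<and>
            lp_norm p (\<lambda>k. Bs n (proj m x) k - B (proj m x) k) \<le> \<epsilon>)
      else
        (\<forall>x\<in>lp_space p. ((\<lambda>n. lp_norm p (\<lambda>k. Bs n x k - B x k)) \<longlongrightarrow> 0) sequentially))"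

definition fsm_applicable :: "ereal \<Rightarrow> ((int \<Rightarrow> complex) \<Rightarrow> (int \<Rightarrow> complex)) \<Rightarrow> bool" where
  "fsm_applicable p A \<longleftrightarrow>
     lp_invertible p A \<and>
     (\<forall>\<^sub>F n in sequentially. fs_invertible A n) \<and>
     strongly_converges p (fs_inverse_embedded A) (inv_into (lp_space p) A)"

definition transfer :: "(int \<Rightarrow> int) \<Rightarrow> int \<Rightarrow> real \<Rightarrow> real^2^2" where
  "transfer v n E = vector [vector [E - real_of_int (v n), -1], vector [1, 0]]"

fun transfer_prod :: "(int \<Rightarrow> int) \<Rightarrow> nat \<Rightarrow> real \<Rightarrow> real^2^2" where
  "transfer_prod v 0 E = mat 1"
| "transfer_prod v (Suc k) E = transfer v (int k) E ** transfer_prod v k E"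

definition monodromy :: "(int \<Rightarrow> int) \<Rightarrow> nat \<Rightarrow> real \<Rightarrow> real^2^2" where
  "monodromy v K E = transfer_prod v K E"

end

theory Submission
  imports Defs
begin

definition is_sol :: "(int \<Rightarrow> int) \<Rightarrow> (int \<Rightarrow> real) \<Rightarrow> bool" where
  "is_sol v u \<longleftrightarrow> (\<forall>n. u (n+1) + u (n-1) + real_of_int (v n) * u n = 0)"

lemma two_step:
  fixes Q :: "int \<Rightarrow> bool"
  assumes "Q m" "\<And>n. Q n \<Longrightarrow> Q (n+1)" "\<And>n. Q n \<Longrightarrow> Q (n-1)"
  shows "Q n"
  using assms by (induction n rule: int_induct[where k=m]) auto

lemma sol_fwd: "is_sol v u \<Longrightarrow> u (n+2) = - u n - real_of_int (v (n+1)) * u (n+1)"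
  unfolding is_sol_def by (erule allE[where x="n+1"]) (simp add: algebra_simps)

lemma sol_bwd: "is_sol v u \<Longrightarrow> u (n-1) = - u (n+1) - real_of_int (v n) * u n"
  unfolding is_sol_def by (erule allE[where x="n"]) (simp add: algebra_simps)

lemma sol_unique:
  assumes u: "is_sol v u" and w: "is_sol v w" and "u m = w m" "u (m+1) = w (m+1)"
  shows "u n = w n"
proof -
  have "u n = w n \<and> u (n+1) = w (n+1)"
  proof (rule two_step[where m=m and Q="\<lambda>n. u n = w n \<and> u (n+1) = w (n+1)"])
    show "u m = w m \<and> u (m+1) = w (m+1)" using assms by simp
  next
    fix n assume "u n = w n \<and> u (n+1) = w (n+1)"
    then show "u (n+1) = w (n+1) \<and> u (n+1+1) = w (n+1+1)"
      using sol_fwd[OF u, of n] sol_fwd[OF w, of n] by (simp add: add.assoc)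
  next
    fix n assume "u n = w n \<and> u (n+1) = w (n+1)"
    then show "u (n-1) = w (n-1) \<and> u (n-1+1) = w (n-1+1)"
      using sol_bwd[OF u, of n] sol_bwd[OF w, of n] by simp
  qed
  then show ?thesis by simp
qed

lemma sol_lincomb:
  assumes "is_sol v u" "is_sol v w"
  shows "is_sol v (\<lambda>n. a * u n + b * w n)"
  using assms unfolding is_sol_def
proof (intro allI)
  fix n
  assume "\<forall>n. u (n + 1) + u (n - 1) + real_of_int (v n) * u n = 0"
     "\<forall>n. w (n + 1) + w (n - 1) + real_of_int (v n) * w n = 0"
  then have "u (n + 1) + u (n - 1) + real_of_int (v n) * u n = 0"
     "w (n + 1) + w (n - 1) + real_of_int (v n) * w n = 0" by auto
  then have "a * (u (n + 1) + u (n - 1) + real_of_int (v n) * u n) + b * (w (n + 1) + w (n - 1) + real_of_int (v n) * w n) = 0" by simp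
  then show "a * u (n + 1) + b * w (n + 1) + (a * u (n - 1) + b * w (n - 1)) + real_of_int (v n) * (a * u n + b * w n) = 0"
    by (simp add: algebra_simps)
qed

lemma sol_shift:
  assumes "is_sol v u" "\<forall>n. v (n + int K) = v n"
  shows "is_sol v (\<lambda>n. u (n + int K))"
  unfolding is_sol_def
proof
  fix n
  have "u (n + int K + 1) + u (n + int K - 1) + real_of_int (v (n + int K)) * u (n + int K) = 0"
    using assms(1) unfolding is_sol_def by blast
  then show "u (n + 1 + int K) + u (n - 1 + int K) + real_of_int (v n) * u (n + int K) = 0"
    using assms(2) by (simp add: algebra_simps)
qed

definition wr :: "(int \<Rightarrow> real) \<Rightarrow> (int \<Rightarrow> real) \<Rightarrow> int \<Rightarrow> real" where
  "wr u w n = u (n-1) * w n - u n * w (n-1)"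

lemma wr_step:
  assumes "is_sol v u" "is_sol v w"
  shows "wr u w (n+1) = wr u w n"
proof -
  have "u (n+1) + u (n-1) + v n * u n = 0" "w (n+1) + w (n-1) + v n * w n = 0"
    using assms unfolding is_sol_def by auto
  then have "u n * (w (n+1) + w (n-1) + v n * w n) - w n * (u (n+1) + u (n-1) + v n * u n) = 0"
    by simp
  then show ?thesis unfolding wr_def by (simp add: algebra_simps)
qed

lemma wr_const:
  assumes "is_sol v u" "is_sol v w"
  shows "wr u w n = wr u w m"
proof -
  have "wr u w n = wr u w m"
  proof (rule two_step[where m=m and Q="\<lambda>n. wr u w n = wr u w m"])
    fix n assume "wr u w n = wr u w m" then show "wr u w (n+1) = wr u w m"
      using wr_step[OF assms] by simp
  next
    fix n assume "wr u w n = wr u w m" then show "wr u w (n-1) = wr u w m"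
      using wr_step[OF assms, of "n-1"] by simp
  qed simp
  then show ?thesis .
qed

lemma sol_ints:
  assumes u: "is_sol v u" and "u m \<in> \<int>" "u (m+1) \<in> \<int>"
  shows "u n \<in> \<int>"
proof -
  have "u n \<in> \<int> \<and> u (n+1) \<in> \<int>"
  proof (rule two_step[where m=m and Q="\<lambda>n. u n \<in> \<int> \<and> u (n+1) \<in> \<int>"])
    show "u m \<in> \<int> \<and> u (m+1) \<in> \<int>" using assms by simp
  next
    fix n assume "u n \<in> \<int> \<and> u (n+1) \<in> \<int>"
    then show "u (n+1) \<in> \<int> \<and> u (n+1+1) \<in> \<int>"
      using sol_fwd[OF u, of n] by (simp add: add.assoc)
  next
    fix n assume "u n \<in> \<int> \<and> u (n+1) \<in> \<int>"
    then show "u (n-1) \<in> \<int> \<and> u (n-1+1) \<in> \<int>"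
      using sol_bwd[OF u, of n] by simp
  qed
  then show ?thesis by simp
qed

fun fw :: "(int \<Rightarrow> int) \<Rightarrow> real \<Rightarrow> real \<Rightarrow> nat \<Rightarrow> real" where
  "fw v a b 0 = b"
| "fw v a b (Suc 0) = a"
| "fw v a b (Suc (Suc k)) = - fw v a b k - real_of_int (v (int k)) * fw v a b (Suc k)"

fun bw :: "(int \<Rightarrow> int) \<Rightarrow> real \<Rightarrow> real \<Rightarrow> nat \<Rightarrow> real" where
  "bw v a b 0 = a"
| "bw v a b (Suc 0) = b"
| "bw v a b (Suc (Suc k)) = - bw v a b k - real_of_int (v (- int k - 1)) * bw v a b (Suc k)"

definition solf :: "(int \<Rightarrow> int) \<Rightarrow> real \<Rightarrow> real \<Rightarrow> int \<Rightarrow> real" where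
  "solf v a b n = (if n \<ge> -1 then fw v a b (nat (n+1)) else bw v a b (nat (-n)))"

lemma solf_neg: "n \<le> 0 \<Longrightarrow> solf v a b n = bw v a b (nat (-n))"
proof -
  assume "n \<le> 0"
  then consider "n = 0" | "n = -1" | "n < -1" by linarith
  then show ?thesis
  proof cases
    case 1 then show ?thesis by (simp add: solf_def)
  next
    case 2 then show ?thesis by (simp add: solf_def numeral_2_eq_2)
  next
    case 3 then show ?thesis by (simp add: solf_def)
  qed
qed

lemma solf_is_sol: "is_sol v (solf v a b)"
  unfolding is_sol_def
proof
  fix n :: int
  show "solf v a b (n + 1) + solf v a b (n - 1) + real_of_int (v n) * solf v a b n = 0"
  proof (cases "n \<ge> 0")
    case True
    define k where "k = nat n"
    have n: "n = int k" using True k_def by simp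
    have "fw v a b (Suc (Suc k)) = - fw v a b k - real_of_int (v (int k)) * fw v a b (Suc k)" by simp
    moreover have "solf v a b (n+1) = fw v a b (Suc (Suc k))" using n by (simp add: solf_def nat_add_distrib)
    moreover have "solf v a b (n-1) = fw v a b k" using n by (simp add: solf_def)
    moreover have "solf v a b n = fw v a b (Suc k)" using n by (simp add: solf_def nat_add_distrib)
    ultimately show ?thesis using n by simp
  next
    case False
    define k where "k = nat (-n-1)"
    have n: "n = - int k - 1" using False k_def by simp
    have "bw v a b (Suc (Suc k)) = - bw v a b k - real_of_int (v (- int k - 1)) * bw v a b (Suc k)" by simp
    moreover have "solf v a b (n+1) = bw v a b k" using n by (simp add: solf_neg)
    moreover have "solf v a b (n-1) = bw v a b (Suc (Suc k))" using n False
      by (subst solf_neg) (auto simp: nat_add_distrib)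
    moreover have "solf v a b n = bw v a b (Suc k)" using n False
      by (subst solf_neg) (auto simp: nat_add_distrib)
    ultimately show ?thesis using n by simp
  qed
qed

lemma solf_0: "solf v a b 0 = a" and solf_m1: "solf v a b (-1) = b"
  by (simp_all add: solf_def)

lemma sol_shift_pot:
  assumes "is_sol (\<lambda>k. v (k + m)) w"
  shows "is_sol v (\<lambda>n. w (n - m))"
  unfolding is_sol_def
proof
  fix n
  have "w (n - m + 1) + w (n - m - 1) + real_of_int (v (n - m + m)) * w (n - m) = 0"
    using assms unfolding is_sol_def by blast
  then show "w (n + 1 - m) + w (n - 1 - m) + real_of_int (v n) * w (n - m) = 0"
    by (simp add: algebra_simps)
qed

lemma sol_exists: "\<exists>u. is_sol v u \<and> u m = a \<and> u (m-1) = b"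
proof -
  let ?u = "\<lambda>n. solf (\<lambda>k. v (k + m)) a b (n - m)"
  have "is_sol v ?u" by (rule sol_shift_pot[OF solf_is_sol])
  moreover have "?u m = a" by (simp add: solf_0)
  moreover have "?u (m-1) = b" by (simp add: solf_m1)
  ultimately show ?thesis by blast
qed

definition fc :: "(int \<Rightarrow> int) \<Rightarrow> int \<Rightarrow> real" where "fc v = solf v 1 0"
definition fs :: "(int \<Rightarrow> int) \<Rightarrow> int \<Rightarrow> real" where "fs v = solf v 0 1"

lemma fc_sol: "is_sol v (fc v)" and fs_sol: "is_sol v (fs v)"
  by (simp_all add: fc_def fs_def solf_is_sol)

lemma fc_0: "fc v 0 = 1" and fc_m1: "fc v (-1) = 0" and fs_0: "fs v 0 = 0" and fs_m1: "fs v (-1) = 1"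
  by (simp_all add: fc_def fs_def solf_0 solf_m1)

lemma sol_repr:
  assumes "is_sol v u"
  shows "u n = u 0 * fc v n + u (-1) * fs v n"
proof (rule sol_unique[OF assms sol_lincomb[OF fc_sol fs_sol], where m="-1"])
  show "u (- 1) = u 0 * fc v (- 1) + u (- 1) * fs v (- 1)" by (simp add: fc_m1 fs_m1)
  show "u (- 1 + 1) = u 0 * fc v (- 1 + 1) + u (- 1) * fs v (- 1 + 1)" by (simp add: fc_0 fs_0)
qed

lemma wr_fc_fs: "wr (fc v) (fs v) n = - 1"
proof -
  have "wr (fc v) (fs v) n = wr (fc v) (fs v) 0" by (rule wr_const[OF fc_sol fs_sol])
  also have "\<dots> = -1" by (simp add: wr_def fc_0 fc_m1 fs_0 fs_m1)
  finally show ?thesis .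
qed

lemma fc_int: "fc v n \<in> \<int>" and fs_int: "fs v n \<in> \<int>"
  by (rule sol_ints[OF fc_sol, where m="-1"]; simp add: fc_0 fc_m1)
     (rule sol_ints[OF fs_sol, where m="-1"]; simp add: fs_0 fs_m1)

lemma transfer_prod_entries:
  "transfer_prod v k 0 $ 1 $ 1 = fc v (int k) \<and> transfer_prod v k 0 $ 1 $ 2 = fs v (int k) \<and>
   transfer_prod v k 0 $ 2 $ 1 = fc v (int k - 1) \<and> transfer_prod v k 0 $ 2 $ 2 = fs v (int k - 1)"
proof (induction k)
  case 0
  then show ?case by (simp add: mat_def fc_0 fc_m1 fs_0 fs_m1)
next
  case (Suc k)
  have c: "fc v (int k + 1) = - fc v (int k - 1) - real_of_int (v (int k)) * fc v (int k)"
    using sol_bwd[OF fc_sol, where n="int k" and v=v] by simp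
  have s: "fs v (int k + 1) = - fs v (int k - 1) - real_of_int (v (int k)) * fs v (int k)"
    using sol_bwd[OF fs_sol, where n="int k" and v=v] by simp
  show ?case using Suc c s
    by (simp add: matrix_matrix_mult_def sum_2 transfer_def algebra_simps)
qed

lemma trace_monodromy: "trace (monodromy v K 0) = fc v (int K) + fs v (int K - 1)"
  using transfer_prod_entries[of v K]
  by (simp add: trace_def monodromy_def sum_2)

lemma inv_const:
  fixes a :: "nat \<Rightarrow> real"
  assumes rec: "\<And>m. a (Suc (Suc m)) = t * a (Suc m) - a m"
  shows "a (Suc m)^2 - t * a (Suc m) * a m + (a m)^2 = a 1 ^2 - t * a 1 * a 0 + (a 0)^2"
proof (induction m)
  case 0 then show ?case by simp
next
  case (Suc m)
  have "a (Suc (Suc m))^2 - t * a (Suc (Suc m)) * a (Suc m) + (a (Suc m))^2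
      = a (Suc m)^2 - t * a (Suc m) * a m + (a m)^2"
    unfolding rec by (simp add: power2_eq_square algebra_simps)
  then show ?case using Suc by simp
qed

lemma decay_zero:
  fixes a :: "nat \<Rightarrow> real"
  assumes rec: "\<And>m. a (Suc (Suc m)) = t * a (Suc m) - a m"
    and t: "\<bar>t\<bar> \<le> 2"
    and small: "\<And>\<epsilon>. \<epsilon> > 0 \<Longrightarrow> \<exists>m. \<bar>a m\<bar> < \<epsilon> \<and> \<bar>a (Suc m)\<bar> < \<epsilon>"
  shows "a 0 = 0"
proof -
  define I where "I = a 1 ^2 - t * a 1 * a 0 + (a 0)^2"
  have Im: "a (Suc m)^2 - t * a (Suc m) * a m + (a m)^2 = I" for m
    using inv_const[where a=a and t=t, OF rec] I_def by simp
  have bnd: "\<bar>I\<bar> \<le> 4 * \<epsilon>^2" if eps: "\<epsilon> > 0" for \<epsilon>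
  proof -
    obtain m where m: "\<bar>a m\<bar> < \<epsilon>" "\<bar>a (Suc m)\<bar> < \<epsilon>" using small[OF eps] by blast
    have "\<bar>I\<bar> \<le> \<bar>a (Suc m)\<bar>^2 + \<bar>t\<bar> * \<bar>a (Suc m)\<bar> * \<bar>a m\<bar> + \<bar>a m\<bar>^2"
    proof -
      have "\<bar>a (Suc m)^2 - t * a (Suc m) * a m + (a m)^2\<bar> \<le> \<bar>a (Suc m)^2\<bar> + \<bar>t * a (Suc m) * a m\<bar> + \<bar>(a m)^2\<bar>"
        by linarith
      then show ?thesis using Im[of m] by (simp add: abs_mult)
    qed
    also have "\<dots> \<le> \<epsilon>^2 + 2 * \<epsilon> * \<epsilon> + \<epsilon>^2"
    proof -
      have "\<bar>a (Suc m)\<bar>^2 \<le> \<epsilon>^2" using m by (intro power_mono) auto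
      moreover have "\<bar>a m\<bar>^2 \<le> \<epsilon>^2" using m by (intro power_mono) auto
      moreover have "\<bar>t\<bar> * \<bar>a (Suc m)\<bar> * \<bar>a m\<bar> \<le> 2 * \<epsilon> * \<epsilon>"
        using m t by (intro mult_mono) auto
      ultimately show ?thesis by linarith
    qed
    finally show ?thesis by (simp add: power2_eq_square)
  qed
  have I0: "I = 0"
  proof (rule ccontr)
    assume "I \<noteq> 0"
    define e where "e = min 1 (\<bar>I\<bar>/8)"
    have "e > 0" using \<open>I \<noteq> 0\<close> by (simp add: e_def)
    have "e \<le> 1" by (simp add: e_def)
    then have "e * e \<le> 1 * e" using \<open>e > 0\<close> by (intro mult_right_mono) auto
    then have "e^2 \<le> e" by (simp add: power2_eq_square)
    then have "\<bar>I\<bar> \<le> 4 * e" using bnd[OF \<open>e > 0\<close>] by linarith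
    also have "\<dots> \<le> \<bar>I\<bar>/2" by (simp add: e_def)
    finally show False using \<open>I \<noteq> 0\<close> by simp
  qed
  have sq: "a (Suc m)^2 = (a m)^2" for m
  proof -
    have "(a (Suc m) - t/2 * a m)^2 + (1 - t^2/4) * (a m)^2 = 0"
      using Im[of m] I0 by (simp add: power2_eq_square algebra_simps)
    moreover have "(1 - t^2/4) * (a m)^2 \<ge> 0"
    proof -
      have "\<bar>t\<bar>^2 \<le> 2^2" by (rule power_mono) (use t in auto)
      then have "t^2 \<le> 4" by simp
      then show ?thesis by simp
    qed
    moreover have "(a (Suc m) - t/2 * a m)^2 \<ge> 0" by simp
    ultimately have "(a (Suc m) - t/2 * a m)^2 = 0" "(1 - t^2/4) * (a m)^2 = 0"
      by linarith+
    then have h1: "a (Suc m) = t/2 * a m" and h2: "(a m)^2 = t^2/4 * (a m)^2" by (auto simp: algebra_simps)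
    have h3: "a (Suc m)^2 = t^2/4 * (a m)^2" unfolding h1 by (simp add: power2_eq_square)
    show ?thesis using trans[OF h3 h2[symmetric]] .
  qed
  have "(a m)^2 = (a 0)^2" for m by (induction m) (use sq in auto)
  then have eq: "\<bar>a m\<bar> = \<bar>a 0\<bar>" for m by (metis power2_abs abs_ge_zero power2_eq_iff_nonneg)
  show "a 0 = 0"
  proof (rule ccontr)
    assume "a 0 \<noteq> 0"
    then obtain m where "\<bar>a m\<bar> < \<bar>a 0\<bar>" using small[of "\<bar>a 0\<bar>"] by auto
    then show False using eq[of m] by simp
  qed
qed

lemma periodic_bounded:
  fixes g :: "int \<Rightarrow> real"
  assumes K: "K \<ge> (1::nat)" and per: "\<And>n. g (n + int K) = g n"
  shows "\<exists>B. \<forall>n. \<bar>g n\<bar> \<le> B"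
proof -
  have gq: "g (r + q * int K) = g r" for r q
  proof (induction q rule: int_induct[where k=0])
    case base then show ?case by simp
  next
    case (step1 i)
    have "g (r + (i+1) * int K) = g (r + i * int K + int K)" by (simp add: algebra_simps)
    then show ?case using step1 per by simp
  next
    case (step2 i)
    have "g (r + i * int K) = g (r + (i - 1) * int K + int K)" by (simp add: algebra_simps)
    then show ?case using step2 per by simp
  qed
  define B where "B = Max ((\<lambda>r. \<bar>g r\<bar>) ` {0..<int K})"
  have "\<bar>g n\<bar> \<le> B" for n
  proof -
    have "g n = g (n mod int K + (n div int K) * int K)" by simp
    also have "\<dots> = g (n mod int K)" by (rule gq)
    finally have "g n = g (n mod int K)" .
    moreover have "n mod int K \<in> {0..<int K}" using K by simp
    ultimately show ?thesis unfolding B_def by (metis (mono_tags, lifting) Max_ge finite_atLeastLessThan_int finite_imageI image_eqI)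
  qed
  then show ?thesis by blast
qed

lemma alg1: fixes A D B C u0 um :: real
  shows "A  *  D - B  *  C = 1 \<Longrightarrow> (u0 * A + um * B)  *  A + (u0 * C + um * D)  *  B - (A + D)  *  (u0 * A + um * B) + u0 = 0"
proof -
  assume h: "A * D - B * C = 1"
  have "(u0 * A + um * B)  *  A + (u0 * C + um * D)  *  B - (A + D)  *  (u0 * A + um * B) + u0 = u0 * (1 - (A * D - B * C))"
    by (simp add: algebra_simps)
  then show ?thesis using h by simp
qed

lemma alg2: fixes A D B C u0 um :: real
  shows "A  *  D - B  *  C = 1 \<Longrightarrow> (u0 * A + um * B)  *  C + (u0 * C + um * D)  *  D - (A + D)  *  (u0 * C + um * D) + um = 0"
proof -
  assume h: "A * D - B * C = 1"
  have "(u0 * A + um * B)  *  C + (u0 * C + um * D)  *  D - (A + D)  *  (u0 * C + um * D) + um = um * (1 - (A * D - B * C))"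
    by (simp add: algebra_simps)
  then show ?thesis using h by simp
qed

locale per =
  fixes v :: "int \<Rightarrow> int" and K :: nat
  assumes K1: "K \<ge> 1" and per: "\<forall>n. v (n + int K) = v n"
begin

definition tr :: real where "tr = fc v (int K) + fs v (int K - 1)"

lemma tr_int: "tr \<in> \<int>"
  unfolding tr_def using fc_int fs_int by (simp add: Ints_add)

lemma det1: "fc v (int K) * fs v (int K - 1) - fs v (int K) * fc v (int K - 1) = 1"
  using wr_fc_fs[of v "int K"] unfolding wr_def by (simp add: algebra_simps)

lemma shift_sol: "is_sol v u \<Longrightarrow> is_sol v (\<lambda>n. u (n + int K))"
  using sol_shift per by blast

lemma ch:
  assumes u: "is_sol v u"
  shows "u (n + 2 * int K) - tr * u (n + int K) + u n = 0"
proof -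
  define w where "w n = u (n + int K)" for n
  have w: "is_sol v w" unfolding w_def by (rule shift_sol[OF u])
  have w2: "is_sol v (\<lambda>n. w (n + int K))" by (rule shift_sol[OF w])
  define z where "z n = w (n + int K) - tr * w n + u n" for n
  have y: "is_sol v (\<lambda>n. 1 * w (n + int K) + (-tr) * w n)" by (rule sol_lincomb[OF w2 w])
  have "is_sol v (\<lambda>n. 1 * (1 * w (n + int K) + (-tr) * w n) + 1 * u n)" by (rule sol_lincomb[OF y u])
  then have z: "is_sol v z" unfolding z_def by simp
  have uK: "u (int K) = u 0 * fc v (int K) + u (-1) * fs v (int K)"
    and uK1: "u (int K - 1) = u 0 * fc v (int K - 1) + u (-1) * fs v (int K - 1)"
    using sol_repr[OF u, of "int K"] sol_repr[OF u, of "int K - 1"] by auto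
  have wK: "w (int K) = w 0 * fc v (int K) + w (-1) * fs v (int K)"
    and wK1: "w (int K - 1) = w 0 * fc v (int K - 1) + w (-1) * fs v (int K - 1)"
    using sol_repr[OF w, of "int K"] sol_repr[OF w, of "int K - 1"] by auto
  have w0: "w 0 = u (int K)" and wm1: "w (-1) = u (int K - 1)" unfolding w_def by simp_all
  have "z 0 = 0"
    unfolding z_def using wK w0 wm1 uK uK1 alg1[OF det1, of "u 0" "u (-1)"] unfolding tr_def
    by simp
  moreover have "z (-1) = 0"
    unfolding z_def using wK1 w0 wm1 uK uK1 alg2[OF det1, of "u 0" "u (-1)"] unfolding tr_def
    by simp
  ultimately have "z n = 0" for n
    using sol_unique[OF z, of "\<lambda>_. 0" "-1" n] by (simp add: is_sol_def)
  then show ?thesis unfolding z_def w_def by (simp add: algebra_simps mult_2)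
qed

end

lemma finite_support_summable:
  fixes f :: "int \<Rightarrow> real"
  assumes "finite S" "\<And>k. k \<notin> S \<Longrightarrow> f k = 0"
  shows "f summable_on UNIV"
proof -
  have "f summable_on UNIV \<longleftrightarrow> f summable_on S"
    by (rule summable_on_cong_neutral) (use assms in auto)
  then show ?thesis using assms(1) by simp
qed

lemma finite_exceed:
  fixes f :: "int \<Rightarrow> real"
  assumes sum: "f summable_on UNIV" and nn: "\<And>k. f k \<ge> 0" and d: "\<delta> > 0"
  shows "finite {k. \<delta> \<le> f k}"
proof (rule ccontr)
  assume inf: "infinite {k. \<delta> \<le> f k}"
  define n where "n = nat (ceiling (infsum f UNIV / \<delta>)) + 1"
  obtain B where B: "finite B" "card B = n" "B \<subseteq> {k. \<delta> \<le> f k}"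
    using infinite_arbitrarily_large[OF inf] by blast
  have "real n * \<delta> = (\<Sum>k\<in>B. \<delta>)" using B by simp
  also have "\<dots> \<le> sum f B" using B by (intro sum_mono) auto
  also have "\<dots> \<le> infsum f UNIV" by (rule finite_sum_le_infsum) (use sum B nn in auto)
  finally have "real n * \<delta> \<le> infsum f UNIV" .
  moreover have "infsum f UNIV / \<delta> < real n" unfolding n_def by linarith
  ultimately show False using d by (simp add: field_simps)
qed

lemma lp_finite_exceed:
  fixes r :: real
  assumes "r \<ge> 1" "x \<in> lp_space (ereal r)" "\<epsilon> > 0"
  shows "finite {k. \<epsilon> \<le> norm (x k)}"
proof -
  have s: "(\<lambda>k. norm (x k) powr r) summable_on UNIV" using assms by (simp add: lp_space_def)
  have "finite {k. \<epsilon> powr r \<le> norm (x k) powr r}"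
    by (rule finite_exceed[OF s]) (use assms in auto)
  moreover have "{k. \<epsilon> \<le> norm (x k)} \<subseteq> {k. \<epsilon> powr r \<le> norm (x k) powr r}"
    using assms by (auto intro: powr_mono2)
  ultimately show ?thesis by (rule finite_subset[rotated])
qed

lemma lp_bounded:
  assumes "1 \<le> p" "x \<in> lp_space p"
  shows "\<exists>B. \<forall>k. norm (x k) \<le> B"
proof (cases "p = \<infinity>")
  case True
  then have "bounded (range x)" using assms by (simp add: lp_space_def)
  then show ?thesis by (auto simp: bounded_iff)
next
  case False
  then obtain r where r: "p = ereal r" using assms by (cases p) auto
  with assms have "r \<ge> 1" by simp
  have fin: "finite {k. 1 \<le> norm (x k)}" by (rule lp_finite_exceed) (use assms r \<open>r \<ge> 1\<close> in auto)
  define B where "B = max 1 (Max ((\<lambda>k. norm (x k)) ` {k. 1 \<le> norm (x k)}))"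
  have "norm (x k) \<le> B" for k
  proof (cases "1 \<le> norm (x k)")
    case True
    then have "norm (x k) \<le> Max ((\<lambda>k. norm (x k)) ` {k. 1 \<le> norm (x k)})"
      using fin by (intro Max_ge) auto
    then show ?thesis unfolding B_def by linarith
  next
    case False then show ?thesis unfolding B_def by linarith
  qed
  then show ?thesis by blast
qed

lemma e0_lp:
  assumes "1 \<le> p"
  shows "(\<lambda>k. if k = 0 then 1 else 0) \<in> lp_space p"
proof (cases "p = \<infinity>")
  case True
  have "bounded (range (\<lambda>k::int. if k = 0 then 1 else 0 :: complex))"
    unfolding bounded_iff by (rule exI[of _ 1]) auto
  then show ?thesis using True by (simp add: lp_space_def)
next
  case False
  then obtain r where r: "p = ereal r" using assms by (cases p) auto
  with assms have "r \<ge> 1" by simp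
  have "(\<lambda>k::int. norm (if k = 0 then 1 else 0 :: complex) powr r) summable_on UNIV"
    by (rule finite_support_summable[of "{0}"]) auto
  then show ?thesis using r False by (simp add: lp_space_def)
qed

context per
begin

lemma sol_eq_right:
  fixes y :: "int \<Rightarrow> real"
  assumes u: "is_sol v u" and rec: "\<And>n. n \<ge> 1 \<Longrightarrow> y (n+1) + y (n-1) + real_of_int (v n) * y n = 0"
    and "u 0 = y 0" "u 1 = y 1"
  shows "n \<ge> 0 \<Longrightarrow> u n = y n"
proof -
  assume "n \<ge> 0"
  have "u n = y n \<and> u (n+1) = y (n+1)"
    using \<open>n \<ge> 0\<close>
  proof (induction n rule: int_ge_induct)
    case base then show ?case using assms by simp
  next
    case (step i)
    have "y (i+2) = - y i - real_of_int (v (i+1)) * y (i+1)"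
      using rec[of "i+1"] step(1) by (simp add: algebra_simps)
    then show ?case using step sol_fwd[OF u, of i] by (simp add: add.assoc)
  qed
  then show ?thesis by simp
qed

lemma sol_eq_left:
  fixes y :: "int \<Rightarrow> real"
  assumes u: "is_sol v u" and rec: "\<And>n. n \<le> -1 \<Longrightarrow> y (n+1) + y (n-1) + real_of_int (v n) * y n = 0"
    and "u 0 = y 0" "u (-1) = y (-1)"
  shows "n \<le> 0 \<Longrightarrow> u n = y n"
proof -
  assume "n \<le> 0"
  have "u n = y n \<and> u (n-1) = y (n-1)"
    using \<open>n \<le> 0\<close>
  proof (induction n rule: int_le_induct)
    case base then show ?case using assms by simp
  next
    case (step i)
    have "y (i-1-1) = - y i - real_of_int (v (i-1)) * y (i-1)"
      using rec[of "i-1"] step(1) by (simp add: algebra_simps)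
    moreover have "u (i-1-1) = - u i - real_of_int (v (i-1)) * u (i-1)"
      using sol_bwd[OF u, of "i-1"] by simp
    ultimately show ?case using step by simp
  qed
  then show ?thesis by simp
qed

lemma decay_sol_right:
  assumes u: "is_sol v u" and t: "\<bar>tr\<bar> \<le> 2"
    and dec: "\<And>\<epsilon>. \<epsilon> > 0 \<Longrightarrow> \<exists>N. \<forall>k\<ge>N. \<bar>u k\<bar> < \<epsilon>"
  shows "u n = 0"
proof -
  define a where "a m = u (n + int m * int K)" for m
  have rec: "a (Suc (Suc m)) = tr * a (Suc m) - a m" for m
    using ch[OF u, of "n + int m * int K"] unfolding a_def by (simp add: algebra_simps)
  have small: "\<exists>m. \<bar>a m\<bar> < \<epsilon> \<and> \<bar>a (Suc m)\<bar> < \<epsilon>" if eps: "\<epsilon> > 0" for \<epsilon>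
  proof -
    obtain N where N: "\<forall>k\<ge>N. \<bar>u k\<bar> < \<epsilon>" using dec[OF eps] by blast
    define m where "m = nat (N - n)"
    have "int m \<ge> N - n" by (simp add: m_def)
    moreover have "int m * int K \<ge> int m * 1" by (rule mult_left_mono) (use K1 in auto)
    ultimately have "n + int m * int K \<ge> N" by linarith
    moreover have "n + int (Suc m) * int K \<ge> N" using K1 calculation by (simp add: algebra_simps)
    ultimately show ?thesis unfolding a_def using N by blast
  qed
  have "a 0 = 0" by (rule decay_zero[OF rec t small])
  then show ?thesis by (simp add: a_def)
qed

lemma decay_sol_left:
  assumes u: "is_sol v u" and t: "\<bar>tr\<bar> \<le> 2"
    and dec: "\<And>\<epsilon>. \<epsilon> > 0 \<Longrightarrow> \<exists>N. \<forall>k\<le>N. \<bar>u k\<bar> < \<epsilon>"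
  shows "u n = 0"
proof -
  define a where "a m = u (n - int m * int K)" for m
  have rec: "a (Suc (Suc m)) = tr * a (Suc m) - a m" for m
    using ch[OF u, of "n - int (Suc (Suc m)) * int K"] unfolding a_def by (simp add: algebra_simps)
  have small: "\<exists>m. \<bar>a m\<bar> < \<epsilon> \<and> \<bar>a (Suc m)\<bar> < \<epsilon>" if eps: "\<epsilon> > 0" for \<epsilon>
  proof -
    obtain N where N: "\<forall>k\<le>N. \<bar>u k\<bar> < \<epsilon>" using dec[OF eps] by blast
    define m where "m = nat (n - N)"
    have "int m \<ge> n - N" by (simp add: m_def)
    moreover have "int m * int K \<ge> int m * 1" by (rule mult_left_mono) (use K1 in auto)
    ultimately have "n - int m * int K \<le> N" by linarith
    moreover have "n - int (Suc m) * int K \<le> N" using K1 calculation by (simp add: algebra_simps)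
    ultimately show ?thesis unfolding a_def using N by blast
  qed
  have "a 0 = 0" by (rule decay_zero[OF rec t small])
  then show ?thesis by (simp add: a_def)
qed

lemma real_seq_zero:
  fixes y :: "int \<Rightarrow> real"
  assumes t: "\<bar>tr\<bar> \<le> 2"
    and rec: "\<And>n. n \<noteq> 0 \<Longrightarrow> y (n+1) + y (n-1) + real_of_int (v n) * y n = 0"
    and fin: "\<And>\<epsilon>. \<epsilon> > 0 \<Longrightarrow> finite {k. \<epsilon> \<le> \<bar>y k\<bar>}"
  shows "y n = 0"
proof -
  obtain u where u: "is_sol v u" "u 1 = y 1" "u (1 - 1) = y (1 - 1)" using sol_exists by blast
  have uy: "k \<ge> 0 \<Longrightarrow> u k = y k" for k by (rule sol_eq_right[OF u(1)]) (use rec u in auto)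
  obtain u' where u': "is_sol v u'" "u' 0 = y 0" "u' (0 - 1) = y (0 - 1)" using sol_exists by blast
  have uy': "k \<le> 0 \<Longrightarrow> u' k = y k" for k by (rule sol_eq_left[OF u'(1)]) (use rec u' in auto)
  have bnd: "\<exists>N. \<forall>k. \<epsilon> \<le> \<bar>y k\<bar> \<longrightarrow> \<bar>k\<bar> \<le> N" if eps: "\<epsilon> > 0" for \<epsilon>
  proof -
    obtain N where "abs ` {k. \<epsilon> \<le> \<bar>y k\<bar>} \<subseteq> {..N}" using fin[OF eps] finite_int_iff_bounded_le by blast
    then show ?thesis by auto
  qed
  have R: "u k = 0" for k
  proof (rule decay_sol_right[OF u(1) t])
    fix \<epsilon> :: real assume e: "\<epsilon> > 0"
    obtain N where N: "\<forall>k. \<epsilon> \<le> \<bar>y k\<bar> \<longrightarrow> \<bar>k\<bar> \<le> N" using bnd[OF e] by blast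
    show "\<exists>N. \<forall>k\<ge>N. \<bar>u k\<bar> < \<epsilon>"
    proof (intro exI[of _ "\<bar>N\<bar> + 1"] allI impI)
      fix k assume "k \<ge> \<bar>N\<bar> + 1"
      then have "\<not> \<bar>k\<bar> \<le> N" "k \<ge> 0" by linarith+
      then have "\<bar>y k\<bar> < \<epsilon>" using N by (meson not_le)
      then show "\<bar>u k\<bar> < \<epsilon>" using uy[OF \<open>k \<ge> 0\<close>] by simp
    qed
  qed
  have L: "u' k = 0" for k
  proof (rule decay_sol_left[OF u'(1) t])
    fix \<epsilon> :: real assume e: "\<epsilon> > 0"
    obtain N where N: "\<forall>k. \<epsilon> \<le> \<bar>y k\<bar> \<longrightarrow> \<bar>k\<bar> \<le> N" using bnd[OF e] by blast
    show "\<exists>N. \<forall>k\<le>N. \<bar>u' k\<bar> < \<epsilon>"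
    proof (intro exI[of _ "- \<bar>N\<bar> - 1"] allI impI)
      fix k assume "k \<le> - \<bar>N\<bar> - 1"
      then have "\<not> \<bar>k\<bar> \<le> N" "k \<le> 0" by linarith+
      then have "\<bar>y k\<bar> < \<epsilon>" using N by (meson not_le)
      then show "\<bar>u' k\<bar> < \<epsilon>" using uy'[OF \<open>k \<le> 0\<close>] by simp
    qed
  qed
  show ?thesis
  proof (cases "n \<ge> 0")
    case True then show ?thesis using uy[of n] R[of n] by simp
  next
    case False then show ?thesis using uy'[of n] L[of n] by simp
  qed
qed

lemma nec_fin:
  assumes t: "\<bar>tr\<bar> \<le> 2" and r: "r \<ge> 1"
  shows "\<not> bij_betw (schroedinger v) (lp_space (ereal r)) (lp_space (ereal r))"
proof
  assume bij: "bij_betw (schroedinger v) (lp_space (ereal r)) (lp_space (ereal r))"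
  define e0 where "e0 = (\<lambda>k::int. if k = 0 then 1 else 0 :: complex)"
  have "e0 \<in> lp_space (ereal r)" unfolding e0_def by (rule e0_lp) (use r in simp)
  then have "e0 \<in> schroedinger v ` lp_space (ereal r)" using bij unfolding bij_betw_def by simp
  then obtain x where x: "x \<in> lp_space (ereal r)" "schroedinger v x = e0" by blast
  have eq: "x (n+1) + x (n-1) + of_int (v n) * x n = e0 n" for n
    using fun_cong[OF x(2), of n] unfolding schroedinger_def by simp
  have recR: "Re (x (n+1)) + Re (x (n-1)) + real_of_int (v n) * Re (x n) = 0" if "n \<noteq> 0" for n
    using arg_cong[OF eq[of n], of Re] that by (simp add: e0_def)
  have recI: "Im (x (n+1)) + Im (x (n-1)) + real_of_int (v n) * Im (x n) = 0" if "n \<noteq> 0" for n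
    using arg_cong[OF eq[of n], of Im] that by (simp add: e0_def)
  have finx: "finite {k. \<epsilon> \<le> norm (x k)}" if "\<epsilon> > 0" for \<epsilon>
    by (rule lp_finite_exceed[OF r x(1) that])
  have finR: "finite {k. \<epsilon> \<le> \<bar>Re (x k)\<bar>}" if "\<epsilon> > 0" for \<epsilon>
    by (rule finite_subset[OF _ finx[OF that]]) (auto intro: order_trans abs_Re_le_cmod)
  have finI: "finite {k. \<epsilon> \<le> \<bar>Im (x k)\<bar>}" if "\<epsilon> > 0" for \<epsilon>
    by (rule finite_subset[OF _ finx[OF that]]) (auto intro: order_trans abs_Im_le_cmod)
  have "Re (x n) = 0" for n by (rule real_seq_zero[OF t recR finR])
  moreover have "Im (x n) = 0" for n by (rule real_seq_zero[OF t recI finI])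
  ultimately have "x n = 0" for n by (simp add: complex_eq_iff)
  then have "e0 0 = 0" using eq[of 0] by simp
  then show False by (simp add: e0_def)
qed

end

context per
begin

lemma bounded_sol_exists:
  assumes t: "\<bar>tr\<bar> \<le> 2"
  shows "\<exists>w. is_sol v w \<and> (\<exists>n. w n \<noteq> 0) \<and> (\<exists>B. \<forall>n. \<bar>w n\<bar> \<le> B)"
proof -
  define u where "u = fc v"
  have u: "is_sol v u" unfolding u_def by (rule fc_sol)
  have u0: "u 0 \<noteq> 0" unfolding u_def by (simp add: fc_0)
  have chu: "u (n + int K + int K) = tr * u (n + int K) - u n" for n
    using ch[OF u, of n] by (simp add: algebra_simps mult_2)
  show ?thesis
  proof (cases "\<bar>tr\<bar> < 2")
    case True
    define I where "I n = u (n + int K)^2 - tr * u (n + int K) * u n + (u n)^2" for n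
    have Iper: "I (n + int K) = I n" for n
      unfolding I_def chu by (simp add: power2_eq_square algebra_simps)
    obtain B where B: "\<forall>n. \<bar>I n\<bar> \<le> B" using periodic_bounded[of K I, OF K1 Iper] by blast
    have tt: "tr^2 < 4"
    proof -
      have "\<bar>tr\<bar>^2 < 2^2" by (rule power_strict_mono) (use True in auto)
      then show ?thesis by simp
    qed
    define c where "c = 1 - tr^2/4"
    have c: "c > 0" using tt by (simp add: c_def)
    have cB: "c * (u n)^2 \<le> B" for n
    proof -
      have "I n = (u (n + int K) - tr/2 * u n)^2 + c * (u n)^2"
        unfolding I_def c_def by (simp add: power2_eq_square algebra_simps)
      moreover have "(u (n + int K) - tr/2 * u n)^2 \<ge> 0" by simp
      ultimately have "c * (u n)^2 \<le> I n" by linarith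
      then show ?thesis using B by (meson abs_ge_self order_trans)
    qed
    then have "\<bar>u n\<bar> \<le> max 1 (B / c)" for n
    proof -
      have h: "(u n)^2 \<le> B / c" using cB[of n] c by (simp add: field_simps mult.commute)
      show ?thesis
      proof (cases "\<bar>u n\<bar> \<le> 1")
        case False
        then have "\<bar>u n\<bar> * 1 \<le> \<bar>u n\<bar> * \<bar>u n\<bar>" by (intro mult_left_mono) auto
        also have "\<dots> = (u n)^2" by (simp add: power2_eq_square abs_mult_self_eq)
        finally show ?thesis using h by linarith
      qed simp
    qed
    then show ?thesis using u u0 by blast
  next
    case False
    then have tt: "tr^2 = 4"
      using t by (metis abs_le_square_iff abs_of_nonneg dual_order.antisym linorder_not_le power2_abs real_sqrt_four real_sqrt_abs real_sqrt_pow2 zero_le_numeral)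
    define w where "w n = 1 * u (n + int K) + (- tr/2) * u n" for n
    have w: "is_sol v w" unfolding w_def by (rule sol_lincomb[OF shift_sol[OF u] u])
    have wper: "w (n + int K) = tr/2 * w n" for n
    proof -
      have "w (n + int K) = tr * u (n + int K) - u n - tr/2 * u (n + int K)"
        unfolding w_def chu by simp
      also have "\<dots> = tr/2 * u (n + int K) - (tr^2/4) * u n" using tt by simp
      also have "\<dots> = tr/2 * w n" unfolding w_def by (simp add: power2_eq_square algebra_simps)
      finally show ?thesis .
    qed
    have atr: "\<bar>tr/2\<bar> = 1" using tt
      by (metis abs_divide abs_numeral abs_of_nonneg abs_power2 div_self real_sqrt_abs real_sqrt_four zero_neq_numeral power2_abs real_sqrt_pow2 abs_ge_zero)
    show ?thesis
    proof (cases "\<exists>n. w n \<noteq> 0")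
      case True
      have "\<bar>w (n + int K)\<bar> = \<bar>w n\<bar>" for n unfolding wper abs_mult atr by simp
      then obtain B where "\<forall>n. \<bar>\<bar>w n\<bar>\<bar> \<le> B" using periodic_bounded[OF K1, of "\<lambda>n. \<bar>w n\<bar>"] by blast
      then show ?thesis using w True by auto
    next
      case False
      then have uper: "u (n + int K) = tr/2 * u n" for n unfolding w_def by (simp add: algebra_simps)
      have "\<bar>u (n + int K)\<bar> = \<bar>u n\<bar>" for n unfolding uper abs_mult atr by simp
      then obtain B where "\<forall>n. \<bar>\<bar>u n\<bar>\<bar> \<le> B" using periodic_bounded[OF K1, of "\<lambda>n. \<bar>u n\<bar>"] by blast
      then show ?thesis using u u0 by auto
    qed
  qed
qed

lemma schroedinger_0: "schroedinger v (\<lambda>_. 0) = (\<lambda>_. 0)"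
  by (simp add: schroedinger_def)

lemma nec_inf:
  assumes t: "\<bar>tr\<bar> \<le> 2"
  shows "\<not> inj_on (schroedinger v) (lp_space \<infinity>)"
proof
  assume inj: "inj_on (schroedinger v) (lp_space \<infinity>)"
  obtain w B n0 where w: "is_sol v w" "w n0 \<noteq> 0" "\<forall>n. \<bar>w n\<bar> \<le> B"
    using bounded_sol_exists[OF t] by blast
  define x where "x n = complex_of_real (w n)" for n
  have "bounded (range x)" unfolding bounded_iff x_def using w(3) by auto
  then have xl: "x \<in> lp_space \<infinity>" by (simp add: lp_space_def)
  have "bounded (range (\<lambda>_::int. 0::complex))" by simp
  then have zl: "(\<lambda>_. 0) \<in> lp_space \<infinity>" by (simp add: lp_space_def)
  have "schroedinger v x = (\<lambda>_. 0)"
  proof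
    fix n
    have "w (n+1) + w (n-1) + real_of_int (v n) * w n = 0" using w(1) unfolding is_sol_def by blast
    then have "complex_of_real (w (n+1) + w (n-1) + real_of_int (v n) * w n) = 0" by simp
    then show "schroedinger v x n = 0" unfolding schroedinger_def x_def by simp
  qed
  then have "x = (\<lambda>_. 0)" using inj_onD[OF inj _ xl zl] schroedinger_0 by simp
  then have "x n0 = 0" by simp
  then show False using w(2) by (simp add: x_def)
qed

lemma necessity:
  assumes p: "1 \<le> p" and f: "fsm_applicable p (schroedinger v)"
  shows "\<bar>tr\<bar> > 2"
proof (rule ccontr)
  assume "\<not> \<bar>tr\<bar> > 2"
  then have t: "\<bar>tr\<bar> \<le> 2" by simp
  have bij: "bij_betw (schroedinger v) (lp_space p) (lp_space p)"
    using f by (simp add: fsm_applicable_def lp_invertible_def)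
  show False
  proof (cases "p = \<infinity>")
    case True
    then show False using bij nec_inf[OF t] by (simp add: bij_betw_def)
  next
    case False
    then obtain r where r: "p = ereal r" using p by (cases p) auto
    with p have "r \<ge> 1" by simp
    then show False using bij nec_fin[OF t] r by simp
  qed
qed

end

lemma periodic_range:
  fixes g :: "int \<Rightarrow> real"
  assumes K: "K \<ge> (1::nat)" and per: "\<And>n. g (n + int K) = g n"
  shows "g n \<in> g ` {0..<int K}"
proof -
  have gq: "g (r + q * int K) = g r" for r q
  proof (induction q rule: int_induct[where k=0])
    case base then show ?case by simp
  next
    case (step1 i)
    have "g (r + (i+1) * int K) = g (r + i * int K + int K)" by (simp add: algebra_simps)
    then show ?case using step1 per by simp
  next
    case (step2 i)
    have "g (r + i * int K) = g (r + (i - 1) * int K + int K)" by (simp add: algebra_simps)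
    then show ?case using step2 per by simp
  qed
  have "g n = g (n mod int K + (n div int K) * int K)" by simp
  also have "\<dots> = g (n mod int K)" by (rule gq)
  finally have "g n = g (n mod int K)" .
  moreover have "n mod int K \<in> {0..<int K}" using K by simp
  ultimately show ?thesis by blast
qed

lemma bloch_bounds:
  fixes u :: "int \<Rightarrow> real"
  assumes K: "K \<ge> (1::nat)" and sh: "\<And>n. u (n + int K) = \<mu> * u n" and mu: "\<mu> \<noteq> 0"
    and nz: "\<And>n. u n \<noteq> 0"
  shows "\<exists>c C. c > 0 \<and> C > 0 \<and> (\<forall>n. c * \<bar>\<mu>\<bar> powr (real_of_int n / real K) \<le> \<bar>u n\<bar>
            \<and> \<bar>u n\<bar> \<le> C * \<bar>\<mu>\<bar> powr (real_of_int n / real K))"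
proof -
  define f where "f n = \<bar>u n\<bar> / \<bar>\<mu>\<bar> powr (real_of_int n / real K)" for n
  have fper: "f (n + int K) = f n" for n
  proof -
    have "\<bar>\<mu>\<bar> powr (real_of_int (n + int K) / real K) = \<bar>\<mu>\<bar> powr (real_of_int n / real K + 1)"
      using K by (simp add: add_divide_distrib)
    also have "\<dots> = \<bar>\<mu>\<bar> powr (real_of_int n / real K) * \<bar>\<mu>\<bar>" by (simp add: powr_add)
    finally show ?thesis unfolding f_def sh using mu by (simp add: abs_mult)
  qed
  have fpos: "f n > 0" for n unfolding f_def using nz mu by simp
  define S where "S = f ` {0..<int K}"
  have S: "finite S" "S \<noteq> {}" using K by (auto simp: S_def)
  have fin: "f n \<in> S" for n unfolding S_def by (rule periodic_range[of K f, OF K fper])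
  define c where "c = Min S"
  define C where "C = Max S"
  have "c \<in> S" "C \<in> S" using S unfolding c_def C_def by auto
  then have cpos: "c > 0" "C > 0" using fpos unfolding S_def by auto
  have "c \<le> f n" "f n \<le> C" for n using fin[of n] S unfolding c_def C_def by auto
  then have "c * \<bar>\<mu>\<bar> powr (real_of_int n / real K) \<le> \<bar>u n\<bar> \<and> \<bar>u n\<bar> \<le> C * \<bar>\<mu>\<bar> powr (real_of_int n / real K)" for n
    unfolding f_def using mu by (simp add: field_simps)
  then show ?thesis using cpos by blast
qed

lemma root_not_int:
  fixes t x :: real
  assumes "t \<in> \<int>" "\<bar>t\<bar> > 2" "x^2 - t * x + 1 = 0"
  shows "x \<notin> \<int>"
proof
  assume "x \<in> \<int>"
  then obtain m where m: "x = of_int m" by (auto elim: Ints_cases)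
  obtain T where T: "t = of_int T" using assms(1) by (auto elim: Ints_cases)
  have "real_of_int (m * (T - m)) = 1" using assms(3) unfolding m T by (simp add: power2_eq_square algebra_simps)
  then have "m * (T - m) = 1" by linarith
  then have "(m = 1 \<and> T - m = 1) \<or> (m = -1 \<and> T - m = -1)" by (simp add: zmult_eq_1_iff)
  then have "\<bar>T\<bar> = 2" by auto
  then show False using assms(2) T by simp
qed

locale hyp = per +
  assumes big: "\<bar>tr\<bar> > 2"
begin

definition mu :: real where
  "mu = (if tr > 0 then (tr - sqrt (tr^2 - 4)) / 2 else (tr + sqrt (tr^2 - 4)) / 2)"

lemma mu_root: "mu^2 - tr * mu + 1 = 0"
proof -
  have "tr^2 - 4 \<ge> 0"
  proof -
    have "2^2 \<le> \<bar>tr\<bar>^2" by (rule power_mono) (use big in auto)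
    then show ?thesis by simp
  qed
  then have s: "(sqrt (tr^2 - 4))^2 = tr^2 - 4" by simp
  show ?thesis unfolding mu_def using s by (auto simp: power2_eq_square field_simps)
qed

lemma mu_bounds: "0 < \<bar>mu\<bar>" "\<bar>mu\<bar> < 1"
proof -
  have t4: "tr^2 - 4 \<ge> 0"
  proof -
    have "2^2 \<le> \<bar>tr\<bar>^2" by (rule power_mono) (use big in auto)
    then show ?thesis by simp
  qed
  define S where "S = sqrt (tr^2 - 4)"
  have S0: "S \<ge> 0" unfolding S_def using t4 by simp
  have S1: "S < \<bar>tr\<bar>"
  proof -
    have "S < sqrt (\<bar>tr\<bar>^2)" unfolding S_def by (rule real_sqrt_less_mono) simp
    then show ?thesis by simp
  qed
  have S2: "\<bar>tr\<bar> - 2 < S"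
  proof -
    have "(\<bar>tr\<bar> - 2)^2 = \<bar>tr\<bar>^2 - 4 * \<bar>tr\<bar> + 4" by (simp add: power2_eq_square algebra_simps)
    then have "(\<bar>tr\<bar> - 2)^2 < tr^2 - 4" using big by simp
    then have "sqrt ((\<bar>tr\<bar> - 2)^2) < S" unfolding S_def by (rule real_sqrt_less_mono)
    then show ?thesis using big by simp
  qed
  have "\<bar>mu\<bar> = (\<bar>tr\<bar> - S) / 2" unfolding mu_def S_def[symmetric] using S0 S1 by auto
  then show "0 < \<bar>mu\<bar>" "\<bar>mu\<bar> < 1" using S1 S2 by auto
qed

lemma mu_nz: "mu \<noteq> 0" using mu_bounds by auto

lemma mu_inv_root: "(1/mu)^2 - tr * (1/mu) + 1 = 0"
proof -
  have "(1/mu)^2 - tr * (1/mu) + 1 = (mu^2 - tr * mu + 1) / mu^2"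
    using mu_nz by (simp add: field_simps power2_eq_square)
  then show ?thesis using mu_root by simp
qed

definition bloch :: "real \<Rightarrow> int \<Rightarrow> real" where
  "bloch m n = fs v (int K) * fc v n + (m - fc v (int K)) * fs v n"

lemma bloch_sol: "is_sol v (bloch m)"
  unfolding bloch_def by (rule sol_lincomb[OF fc_sol fs_sol])

lemma bloch_shift:
  assumes root: "m^2 - tr * m + 1 = 0"
  shows "bloch m (n + int K) = m * bloch m n"
proof -
  have s1: "is_sol v (\<lambda>n. bloch m (n + int K))" by (rule shift_sol[OF bloch_sol])
  have s2: "is_sol v (\<lambda>n. m * bloch m n + 0 * bloch m n)" by (rule sol_lincomb[OF bloch_sol bloch_sol])
  have d: "fc v (int K) * fs v (int K - 1) - fs v (int K) * fc v (int K - 1) = 1" by (rule det1)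
  have e1: "bloch m (-1 + int K) = m * bloch m (-1)"
  proof -
    have "bloch m (-1 + int K) = fs v (int K) * fc v (int K - 1) + (m - fc v (int K)) * fs v (int K - 1)"
      unfolding bloch_def by (simp add: algebra_simps)
    also have "\<dots> = m * fs v (int K - 1) - 1" using d by (simp add: algebra_simps)
    also have "\<dots> = m * (m - fc v (int K))"
      using root unfolding tr_def by (simp add: power2_eq_square algebra_simps)
    also have "\<dots> = m * bloch m (-1)" unfolding bloch_def by (simp add: fc_m1 fs_m1)
    finally show ?thesis .
  qed
  have e0: "bloch m (-1 + 1 + int K) = m * bloch m (-1 + 1)"
    unfolding bloch_def by (simp add: fc_0 fs_0 algebra_simps)
  have "bloch m (n + int K) = m * bloch m n + 0 * bloch m n"
    by (rule sol_unique[OF s1 s2, where m="-1"]) (use e1 e0 in simp_all)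
  then show ?thesis by simp
qed

lemma bloch_nz:
  assumes root: "m^2 - tr * m + 1 = 0"
  shows "bloch m n \<noteq> 0"
proof
  assume z: "bloch m n = 0"
  have mi: "m \<notin> \<int>" by (rule root_not_int[OF tr_int big root])
  have b1: "bloch m (n+1) \<noteq> 0"
  proof
    assume z1: "bloch m (n+1) = 0"
    have zs: "is_sol v (\<lambda>_. 0)" by (simp add: is_sol_def)
    have bz: "bloch m k = 0" for k
      using sol_unique[OF bloch_sol zs, of m n k] z z1 by simp
    have "bloch m (-1) = m - fc v (int K)" unfolding bloch_def by (simp add: fc_m1 fs_m1)
    then have "m = fc v (int K)" using bz[of "-1"] by simp
    then show False using mi fc_int by metis
  qed
  obtain w where w: "is_sol v w" "w (n+1) = 1" "w (n + 1 - 1) = 0" using sol_exists by blast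
  have w0: "w n = 0" using w(3) by simp
  have wi: "w k \<in> \<int>" for k by (rule sol_ints[OF w(1), where m=n]) (simp_all add: w0 w(2))
  have ws: "is_sol v (\<lambda>k. bloch m (n+1) * w k + 0 * w k)" by (rule sol_lincomb[OF w(1) w(1)])
  have bw: "bloch m k = bloch m (n+1) * w k" for k
    using sol_unique[OF bloch_sol ws, of m n k] z w0 w(2) by simp
  have "bloch m (n + 1 + int K) = m * bloch m (n+1)" by (rule bloch_shift[OF root])
  then have "bloch m (n+1) * w (n + 1 + int K) = m * bloch m (n+1)" unfolding bw[of "n + 1 + int K"] .
  then have "w (n + 1 + int K) = m" using b1 by simp
  then show False using wi mi by metis
qed

definition up :: "int \<Rightarrow> real" where "up = bloch mu"
definition um :: "int \<Rightarrow> real" where "um = bloch (1/mu)"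

lemma up_sol: "is_sol v up" and um_sol: "is_sol v um"
  unfolding up_def um_def by (simp_all add: bloch_sol)

lemma up_shift: "up (n + int K) = mu * up n"
  unfolding up_def by (rule bloch_shift[OF mu_root])
lemma um_shift: "um (n + int K) = (1/mu) * um n"
  unfolding um_def by (rule bloch_shift[OF mu_inv_root])
lemma up_nz: "up n \<noteq> 0" unfolding up_def by (rule bloch_nz[OF mu_root])
lemma um_nz: "um n \<noteq> 0" unfolding um_def by (rule bloch_nz[OF mu_inv_root])

definition rho :: real where "rho = \<bar>mu\<bar> powr (1 / real K)"

lemma rho_bounds: "0 < rho" "rho < 1"
proof -
  show "0 < rho" unfolding rho_def using mu_bounds by simp
  have "\<bar>mu\<bar> powr (1 / real K) < 1 powr (1 / real K)"
    by (rule powr_less_mono2) (use K1 mu_bounds in auto)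
  then show "rho < 1" unfolding rho_def by simp
qed

lemma rho_pow: "rho powr x = \<bar>mu\<bar> powr (x / real K)"
  unfolding rho_def powr_powr by simp

definition W0 :: real where "W0 = wr um up 0"

lemma W0_const: "wr um up n = W0"
  unfolding W0_def by (rule wr_const[OF um_sol up_sol])

lemma W0_nz: "W0 \<noteq> 0"
proof
  assume W: "W0 = 0"
  define l where "l = um 0 / up 0"
  have "um (-1) * up 0 = um 0 * up (-1)" using W unfolding W0_def wr_def by simp
  then have e: "um (-1) = l * up (-1)" unfolding l_def using up_nz[of 0] by (simp add: field_simps)
  have "um k = l * up k + 0 * up k" for k
    by (rule sol_unique[OF um_sol sol_lincomb[OF up_sol up_sol], where m="-1"])
       (use e up_nz[of 0] in \<open>auto simp: l_def\<close>)
  then have ul: "um k = l * up k" for k by simp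
  have "(1/mu) * um 0 = um (0 + int K)" using um_shift[of 0] by simp
  also have "\<dots> = l * (mu * up 0)" using ul[of "0 + int K"] up_shift[of 0] by simp
  also have "\<dots> = mu * um 0" using ul[of 0] by simp
  finally have "(1/mu) * um 0 = mu * um 0" .
  then have "1/mu = mu" using um_nz[of 0] by (metis mult_right_cancel)
  then have "mu * mu = 1" using mu_nz by (simp add: field_simps)
  moreover have "\<bar>mu\<bar> * \<bar>mu\<bar> < 1 * 1" using mu_bounds by (intro mult_strict_mono) auto
  ultimately show False by (simp add: abs_mult[symmetric])
qed

lemma up_bounds: "\<exists>c C. c > 0 \<and> C > 0 \<and> (\<forall>n. c * rho powr (real_of_int n) \<le> \<bar>up n\<bar> \<and> \<bar>up n\<bar> \<le> C * rho powr (real_of_int n))"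
  using bloch_bounds[of K up mu, OF K1 up_shift mu_nz up_nz] unfolding rho_pow by simp

lemma um_bounds: "\<exists>c C. c > 0 \<and> C > 0 \<and> (\<forall>n. c * rho powr (- real_of_int n) \<le> \<bar>um n\<bar> \<and> \<bar>um n\<bar> \<le> C * rho powr (- real_of_int n))"
proof -
  have m: "1/mu \<noteq> 0" using mu_nz by simp
  have "\<bar>1/mu\<bar> powr (real_of_int n / real K) = rho powr (- real_of_int n)" for n
    unfolding rho_pow by (simp add: powr_minus_divide powr_divide)
  then show ?thesis using bloch_bounds[of K um "1/mu", OF K1 um_shift m um_nz] by simp
qed

end

definition green :: "(int \<Rightarrow> real) \<Rightarrow> (int \<Rightarrow> real) \<Rightarrow> real \<Rightarrow> int \<Rightarrow> int \<Rightarrow> real" where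
  "green \<phi> \<psi> W i j = \<phi> (min i j) * \<psi> (max i j) / W"

lemma green_sym: "green \<phi> \<psi> W i j = green \<phi> \<psi> W j i"
  unfolding green_def by (simp add: min.commute max.commute)

lemma green_eq:
  assumes phi: "is_sol v \<phi>" and psi: "is_sol v \<psi>" and W: "\<And>i. wr \<phi> \<psi> i = W" "W \<noteq> 0"
  shows "green \<phi> \<psi> W (i+1) j + green \<phi> \<psi> W (i-1) j + real_of_int (v i) * green \<phi> \<psi> W i j
         = (if i = j then 1 else 0)"
proof -
  have ep: "\<phi> (i+1) + \<phi> (i-1) + real_of_int (v i) * \<phi> i = 0" using phi unfolding is_sol_def by blast
  have es: "\<psi> (i+1) + \<psi> (i-1) + real_of_int (v i) * \<psi> i = 0" using psi unfolding is_sol_def by blast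
  consider "i < j" | "i > j" | "i = j" by linarith
  then show ?thesis
  proof cases
    case 1
    then have "min (i+1) j = i+1" "max (i+1) j = j" "min (i-1) j = i-1" "max (i-1) j = j"
      "min i j = i" "max i j = j" by auto
    then have "green \<phi> \<psi> W (i+1) j + green \<phi> \<psi> W (i-1) j + real_of_int (v i) * green \<phi> \<psi> W i j
        = (\<phi> (i+1) + \<phi> (i-1) + real_of_int (v i) * \<phi> i) * \<psi> j / W"
      unfolding green_def using W(2) by (simp add: field_simps)
    then show ?thesis using ep 1 by simp
  next
    case 2
    then have "min (i+1) j = j" "max (i+1) j = i+1" "min (i-1) j = j" "max (i-1) j = i-1"
      "min i j = j" "max i j = i" by auto
    then have "green \<phi> \<psi> W (i+1) j + green \<phi> \<psi> W (i-1) j + real_of_int (v i) * green \<phi> \<psi> W i j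
        = \<phi> j * (\<psi> (i+1) + \<psi> (i-1) + real_of_int (v i) * \<psi> i) / W"
      unfolding green_def using W(2) by (simp add: field_simps)
    then show ?thesis using es 2 by simp
  next
    case 3
    then have "green \<phi> \<psi> W (i+1) j + green \<phi> \<psi> W (i-1) j + real_of_int (v i) * green \<phi> \<psi> W i j
        = (\<phi> i * \<psi> (i+1) + \<phi> (i-1) * \<psi> i + real_of_int (v i) * \<phi> i * \<psi> i) / W"
      unfolding green_def using W(2) by (simp add: field_simps)
    also have "\<phi> i * \<psi> (i+1) + \<phi> (i-1) * \<psi> i + real_of_int (v i) * \<phi> i * \<psi> i
        = \<phi> i * (\<psi> (i+1) + \<psi> (i-1) + real_of_int (v i) * \<psi> i) + wr \<phi> \<psi> i"
      unfolding wr_def by (simp add: algebra_simps)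
    also have "\<dots> = W" using es W(1)[of i] by simp
    finally show ?thesis using 3 W(2) by simp
  qed
qed

context hyp
begin

definition G :: "int \<Rightarrow> int \<Rightarrow> real" where "G = green um up W0"

lemma G_eq: "G (i+1) j + G (i-1) j + real_of_int (v i) * G i j = (if i = j then 1 else 0)"
  unfolding G_def by (rule green_eq[OF um_sol up_sol W0_const W0_nz])

definition phi :: "nat \<Rightarrow> int \<Rightarrow> real" where
  "phi n i = up (- int n - 1) * um i - um (- int n - 1) * up i"
definition psi :: "nat \<Rightarrow> int \<Rightarrow> real" where
  "psi n j = um (int n + 1) * up j - up (int n + 1) * um j"
definition Dn :: "nat \<Rightarrow> real" where
  "Dn n = up (- int n - 1) * um (int n + 1) - um (- int n - 1) * up (int n + 1)"

lemma phi_sol: "is_sol v (phi n)"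
proof -
  have "is_sol v (\<lambda>i. up (- int n - 1) * um i + (- um (- int n - 1)) * up i)"
    by (rule sol_lincomb[OF um_sol up_sol])
  then show ?thesis unfolding phi_def by simp
qed

lemma psi_sol: "is_sol v (psi n)"
proof -
  have "is_sol v (\<lambda>i. um (int n + 1) * up i + (- up (int n + 1)) * um i)"
    by (rule sol_lincomb[OF up_sol um_sol])
  then show ?thesis unfolding psi_def by simp
qed

lemma wr_phi_psi: "wr (phi n) (psi n) i = Dn n * W0"
proof -
  have w: "um (i-1) * up i - um i * up (i-1) = W0" using W0_const[of i] unfolding wr_def .
  define A where "A = up (- int n - 1)"
  define B where "B = um (- int n - 1)"
  define C where "C = um (int n + 1)"
  define D where "D = up (int n + 1)"
  have "wr (phi n) (psi n) i = (A * C - B * D) * (um (i-1) * up i - um i * up (i-1))"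
    unfolding wr_def phi_def psi_def A_def[symmetric] B_def[symmetric] C_def[symmetric] D_def[symmetric]
    by (simp add: algebra_simps)
  then show ?thesis unfolding w Dn_def A_def B_def C_def D_def .
qed

lemma phi_a: "phi n (- int n - 1) = 0" unfolding phi_def by simp
lemma psi_b: "psi n (int n + 1) = 0" unfolding psi_def by simp
lemma phi_b: "phi n (int n + 1) = Dn n" unfolding phi_def Dn_def by simp
lemma phi_a1: "phi n (- int n) = - W0"
  using W0_const[of "- int n"] unfolding phi_def wr_def by (simp add: algebra_simps)

definition Gf :: "nat \<Rightarrow> int \<Rightarrow> int \<Rightarrow> real" where
  "Gf n = green (phi n) (psi n) (Dn n * W0)"

lemma Gf_eq: "Dn n \<noteq> 0 \<Longrightarrow> Gf n (i+1) j + Gf n (i-1) j + real_of_int (v i) * Gf n i j = (if i = j then 1 else 0)"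
  unfolding Gf_def by (rule green_eq[OF phi_sol psi_sol wr_phi_psi]) (use W0_nz in simp)

lemma Gf_left: "j \<ge> - int n - 1 \<Longrightarrow> Gf n (- int n - 1) j = 0"
  unfolding Gf_def green_def by (simp add: min_def phi_a)
lemma Gf_right: "j \<le> int n + 1 \<Longrightarrow> Gf n (int n + 1) j = 0"
  unfolding Gf_def green_def by (simp add: max_def psi_b)

definition Gn :: "nat \<Rightarrow> int \<Rightarrow> int \<Rightarrow> real" where
  "Gn n i j = (if \<bar>i\<bar> \<le> int n \<and> \<bar>j\<bar> \<le> int n then Gf n i j else 0)"

end

lemma diff_formula:
  fixes Pa Ma Pb Mb Pi Mi Pj Mj W :: real
  assumes "Pa * Mb - Ma * Pb \<noteq> 0" "W \<noteq> 0"
  shows "(Pa * Mi - Ma * Pi) * (Mb * Pj - Pb * Mj) / ((Pa * Mb - Ma * Pb) * W) - Mi * Pj / W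
    = (- (Pa * Pb * Mi * Mj) - Ma * Mb * Pi * Pj + Ma * Pb * (Pi * Mj + Mi * Pj)) / ((Pa * Mb - Ma * Pb) * W)"
  using assms by (simp add: field_simps)

context hyp
begin

definition E :: "real \<Rightarrow> real" where "E x = rho powr x"

lemma E_pos: "E x > 0" unfolding E_def using rho_bounds by simp
lemma E_add: "E (x + y) = E x * E y" unfolding E_def by (simp add: powr_add)
lemma E_mono: "x \<le> y \<Longrightarrow> E y \<le> E x" unfolding E_def using rho_bounds by (intro powr_mono') auto
lemma E_diff: "E x / E y = E (x - y)" unfolding E_def by (simp add: powr_diff)

lemma ucbounds: "\<exists>c C. c > 0 \<and> C > 0 \<and> (\<forall>n. c * E (real_of_int n) \<le> \<bar>up n\<bar> \<and> \<bar>up n\<bar> \<le> C * E (real_of_int n)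
   \<and> c * E (- real_of_int n) \<le> \<bar>um n\<bar> \<and> \<bar>um n\<bar> \<le> C * E (- real_of_int n))"
proof -
  obtain c1 C1 where 1: "c1 > 0" "C1 > 0" "\<forall>n. c1 * rho powr (real_of_int n) \<le> \<bar>up n\<bar> \<and> \<bar>up n\<bar> \<le> C1 * rho powr (real_of_int n)"
    using up_bounds by blast
  obtain c2 C2 where 2: "c2 > 0" "C2 > 0" "\<forall>n. c2 * rho powr (- real_of_int n) \<le> \<bar>um n\<bar> \<and> \<bar>um n\<bar> \<le> C2 * rho powr (- real_of_int n)"
    using um_bounds by blast
  define c where "c = min c1 c2"
  define C where "C = max C1 C2"
  have "c * E (real_of_int n) \<le> \<bar>up n\<bar> \<and> \<bar>up n\<bar> \<le> C * E (real_of_int n)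
   \<and> c * E (- real_of_int n) \<le> \<bar>um n\<bar> \<and> \<bar>um n\<bar> \<le> C * E (- real_of_int n)" for n
  proof -
    have "c * E (real_of_int n) \<le> c1 * E (real_of_int n)" unfolding c_def by (intro mult_right_mono) (auto simp: E_pos less_imp_le)
    moreover have "C1 * E (real_of_int n) \<le> C * E (real_of_int n)" unfolding C_def by (intro mult_right_mono) (auto simp: E_pos less_imp_le)
    moreover have "c * E (- real_of_int n) \<le> c2 * E (- real_of_int n)" unfolding c_def by (intro mult_right_mono) (auto simp: E_pos less_imp_le)
    moreover have "C2 * E (- real_of_int n) \<le> C * E (- real_of_int n)" unfolding C_def by (intro mult_right_mono) (auto simp: E_pos less_imp_le)
    ultimately show ?thesis using 1(3) 2(3) unfolding E_def by (meson order_trans)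
  qed
  moreover have "c > 0" "C > 0" using 1 2 by (auto simp: c_def C_def)
  ultimately show ?thesis by blast
qed

lemma prod_bd:
  assumes "\<bar>x\<bar> \<le> A * E s" "\<bar>y\<bar> \<le> B * E t" "A \<ge> 0" "B \<ge> 0"
  shows "\<bar>x * y\<bar> \<le> (A * B) * E (s + t)"
proof -
  have "\<bar>x * y\<bar> = \<bar>x\<bar> * \<bar>y\<bar>" by (simp add: abs_mult)
  also have "\<dots> \<le> (A * E s) * (B * E t)" using assms by (intro mult_mono) auto
  also have "\<dots> = (A * B) * E (s + t)" by (simp add: E_add)
  finally show ?thesis .
qed

lemma G_bound: "\<exists>A>0. \<forall>i j. \<bar>G i j\<bar> \<le> A * E \<bar>real_of_int i - real_of_int j\<bar>"
proof -
  obtain c C where cC: "c > 0" "C > 0" "\<forall>n. c * E (real_of_int n) \<le> \<bar>up n\<bar> \<and> \<bar>up n\<bar> \<le> C * E (real_of_int n)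
   \<and> c * E (- real_of_int n) \<le> \<bar>um n\<bar> \<and> \<bar>um n\<bar> \<le> C * E (- real_of_int n)" using ucbounds by blast
  define A where "A = C * C / \<bar>W0\<bar>"
  have A: "A > 0" unfolding A_def using cC W0_nz by simp
  have le: "\<bar>G i j\<bar> \<le> A * E (real_of_int j - real_of_int i)" if "i \<le> j" for i j
  proof -
    have "\<bar>um i * up j\<bar> \<le> (C * C) * E (- real_of_int i + real_of_int j)"
      by (rule prod_bd) (use cC in auto)
    then show ?thesis using that W0_nz unfolding G_def green_def A_def
      by (simp add: abs_mult abs_divide min_def max_def field_simps)
  qed
  have "\<bar>G i j\<bar> \<le> A * E \<bar>real_of_int i - real_of_int j\<bar>" for i j
  proof (cases "i \<le> j")
    case True
    have e: "\<bar>real_of_int i - real_of_int j\<bar> = real_of_int j - real_of_int i" using True by simp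
    show ?thesis using le[OF True] unfolding e .
  next
    case False
    then have "\<bar>G j i\<bar> \<le> A * E (real_of_int i - real_of_int j)" using le[of j i] by simp
    moreover have e: "\<bar>real_of_int i - real_of_int j\<bar> = real_of_int i - real_of_int j" using False by simp
    ultimately show ?thesis unfolding G_def e by (simp add: green_sym)
  qed
  then show ?thesis using A by blast
qed

end

lemma expo_in:
  fixes ri rj rn :: real
  assumes "ri \<le> rj" "\<bar>ri\<bar> \<le> rn" "\<bar>rj\<bar> \<le> rn"
  shows "(\<bar>ri - rj\<bar> + rn - min \<bar>ri\<bar> \<bar>rj\<bar>) / 4 \<le> 2 * rn + 2 - ri - rj"
    "(\<bar>ri - rj\<bar> + rn - min \<bar>ri\<bar> \<bar>rj\<bar>) / 4 \<le> 2 * rn + 2 + ri + rj"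
    "(\<bar>ri - rj\<bar> + rn - min \<bar>ri\<bar> \<bar>rj\<bar>) / 4 \<le> 4 * rn + 4 + ri - rj"
    "(\<bar>ri - rj\<bar> + rn - min \<bar>ri\<bar> \<bar>rj\<bar>) / 4 \<le> 4 * rn + 4 - ri + rj"
    "\<bar>ri - rj\<bar> / 4 \<le> (\<bar>ri - rj\<bar> + rn - min \<bar>ri\<bar> \<bar>rj\<bar>) / 4"
  using assms by (simp_all add: min_def split: if_splits; linarith)+

lemma aux_lin: fixes rn B A d :: real shows "rn < B \<Longrightarrow> B - A \<le> d \<Longrightarrow> 0 \<le> d \<Longrightarrow> (d + rn - A) / 4 \<le> d"
  by (simp add: field_simps)

lemma expo_out:
  fixes ri rj rn :: real
  assumes "\<not> (\<bar>ri\<bar> \<le> rn \<and> \<bar>rj\<bar> \<le> rn)" "rn \<ge> 0"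
  shows "(\<bar>ri - rj\<bar> + rn - min \<bar>ri\<bar> \<bar>rj\<bar>) / 4 \<le> \<bar>ri - rj\<bar>" 
proof (cases "\<bar>ri\<bar> \<le> \<bar>rj\<bar>")
  case True
  then have m: "min \<bar>ri\<bar> \<bar>rj\<bar> = \<bar>ri\<bar>" by simp
  have "\<bar>rj\<bar> > rn" using assms True by auto
  moreover have "\<bar>rj\<bar> - \<bar>ri\<bar> \<le> \<bar>ri - rj\<bar>" by (metis abs_minus_commute abs_triangle_ineq2)
  moreover have "\<bar>ri - rj\<bar> \<ge> 0" by simp
  ultimately show ?thesis unfolding m by (rule aux_lin)
next
  case False
  then have m: "min \<bar>ri\<bar> \<bar>rj\<bar> = \<bar>rj\<bar>" by simp
  have "\<bar>ri\<bar> > rn" using assms False by auto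
  moreover have "\<bar>ri\<bar> - \<bar>rj\<bar> \<le> \<bar>ri - rj\<bar>" by (metis abs_triangle_ineq2)
  moreover have "\<bar>ri - rj\<bar> \<ge> 0" by simp
  ultimately show ?thesis unfolding m by (rule aux_lin)
qed

lemma half_aux: fixes Y P Q D :: real shows "Y \<le> P \<Longrightarrow> Q \<le> Y / 2 \<Longrightarrow> P - Q \<le> D \<Longrightarrow> Y / 2 \<le> D"
  by linarith

lemma abs4: fixes x y z w :: real shows "\<bar>- x - y + (z + w)\<bar> \<le> \<bar>x\<bar> + \<bar>y\<bar> + \<bar>z\<bar> + \<bar>w\<bar>"
  by linarith

context hyp
begin

definition ucb :: "real \<Rightarrow> real \<Rightarrow> bool" where
  "ucb c C \<longleftrightarrow> c > 0 \<and> C > 0 \<and> (\<forall>n. c * E (real_of_int n) \<le> \<bar>up n\<bar> \<and> \<bar>up n\<bar> \<le> C * E (real_of_int n)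
   \<and> c * E (- real_of_int n) \<le> \<bar>um n\<bar> \<and> \<bar>um n\<bar> \<le> C * E (- real_of_int n))"

lemma ucb_ex: "\<exists>c C. ucb c C" unfolding ucb_def using ucbounds by blast

lemma prod4:
  assumes "\<bar>x1\<bar> \<le> C * E s1" "\<bar>x2\<bar> \<le> C * E s2" "\<bar>x3\<bar> \<le> C * E s3" "\<bar>x4\<bar> \<le> C * E s4" "C \<ge> 0"
  shows "\<bar>x1 * x2 * x3 * x4\<bar> \<le> C^4 * E (s1 + s2 + s3 + s4)"
proof -
  have "\<bar>x1 * x2\<bar> \<le> (C * C) * E (s1 + s2)" by (rule prod_bd) (use assms in auto)
  then have "\<bar>x1 * x2 * x3\<bar> \<le> ((C * C) * C) * E (s1 + s2 + s3)" by (rule prod_bd) (use assms in auto)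
  then have "\<bar>x1 * x2 * x3 * x4\<bar> \<le> (((C * C) * C) * C) * E (s1 + s2 + s3 + s4)" by (rule prod_bd) (use assms in auto)
  then show ?thesis by (simp add: power4_eq_xxxx)
qed

lemma Dn_lower:
  assumes cC: "ucb c C" and small: "C * C * E (4 * real n + 4) \<le> c * c / 2"
  shows "\<bar>Dn n\<bar> \<ge> c * c / 2 * E (- (2 * real n + 2))"
proof -
  define a where "a = - int n - 1"
  define b where "b = int n + 1"
  have ra: "real_of_int a = - real n - 1" and rb: "real_of_int b = real n + 1" by (simp_all add: a_def b_def)
  have B: "c > 0" "C > 0" "\<And>k. c * E (real_of_int k) \<le> \<bar>up k\<bar>" "\<And>k. \<bar>up k\<bar> \<le> C * E (real_of_int k)"
     "\<And>k. c * E (- real_of_int k) \<le> \<bar>um k\<bar>" "\<And>k. \<bar>um k\<bar> \<le> C * E (- real_of_int k)"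
    using cC unfolding ucb_def by auto
  have l1: "c * c * E (- (2 * real n + 2)) \<le> \<bar>up a * um b\<bar>"
  proof -
    have "(c * E (real_of_int a)) * (c * E (- real_of_int b)) \<le> \<bar>up a\<bar> * \<bar>um b\<bar>"
      using B by (intro mult_mono) (auto simp: E_pos less_imp_le)
    moreover have "(c * E (real_of_int a)) * (c * E (- real_of_int b)) = c * c * E (real_of_int a + - real_of_int b)"
      unfolding E_add[of "real_of_int a" "- real_of_int b"] by simp
    moreover have "real_of_int a + - real_of_int b = - (2 * real n + 2)" unfolding ra rb by simp
    ultimately show ?thesis by (simp add: abs_mult)
  qed
  have l2: "\<bar>um a * up b\<bar> \<le> c * c / 2 * E (- (2 * real n + 2))"
  proof -
    have "\<bar>um a * up b\<bar> \<le> (C * C) * E (- real_of_int a + real_of_int b)"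
      by (rule prod_bd) (use B in \<open>auto simp: less_imp_le\<close>)
    also have "- real_of_int a + real_of_int b = (4 * real n + 4) + (- (2 * real n + 2))" unfolding ra rb by simp
    also have "(C * C) * E \<dots> = (C * C * E (4 * real n + 4)) * E (- (2 * real n + 2))"
      unfolding E_add[of "4 * real n + 4" "- (2 * real n + 2)"] by (simp only: mult.assoc)
    also have "\<dots> \<le> (c * c / 2) * E (- (2 * real n + 2))"
      by (rule mult_right_mono[OF small]) (simp add: E_pos less_imp_le)
    finally show ?thesis .
  qed
  have "Dn n = up a * um b - um a * up b" unfolding Dn_def a_def b_def ..
  then have "\<bar>Dn n\<bar> \<ge> \<bar>up a * um b\<bar> - \<bar>um a * up b\<bar>" by simp
  moreover have "c * c / 2 * E (- (2 * real n + 2)) = (c * c * E (- (2 * real n + 2))) / 2" by simp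
  ultimately show ?thesis using half_aux[OF l1] l2 by simp
qed


lemma box_est:
  assumes cC: "ucb c C" and small: "C * C * E (4 * real n + 4) \<le> c * c / 2"
    and ij: "i \<le> j" "\<bar>i\<bar> \<le> int n" "\<bar>j\<bar> \<le> int n"
  shows "\<bar>Gn n i j - G i j\<bar> \<le> (8 * C^4 / (c * c * \<bar>W0\<bar>)) *
     E ((\<bar>real_of_int i - real_of_int j\<bar> + real n - min \<bar>real_of_int i\<bar> \<bar>real_of_int j\<bar>) / 4)"
proof -
  define a where "a = - int n - 1"
  define b where "b = int n + 1"
  define X4 where "X4 = (\<bar>real_of_int i - real_of_int j\<bar> + real n - min \<bar>real_of_int i\<bar> \<bar>real_of_int j\<bar>) / 4"
  define m where "m = - (2 * real n + 2)"
  have ra: "real_of_int a = - real n - 1" and rb: "real_of_int b = real n + 1" by (simp_all add: a_def b_def)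
  have B: "c > 0" "C > 0" "\<And>k. c * E (real_of_int k) \<le> \<bar>up k\<bar>" "\<And>k. \<bar>up k\<bar> \<le> C * E (real_of_int k)"
     "\<And>k. c * E (- real_of_int k) \<le> \<bar>um k\<bar>" "\<And>k. \<bar>um k\<bar> \<le> C * E (- real_of_int k)"
    using cC unfolding ucb_def by auto
  have DL: "\<bar>Dn n\<bar> \<ge> c * c / 2 * E m" unfolding m_def by (rule Dn_lower[OF cC small])
  have DLp: "c * c / 2 * E m > 0" using B E_pos by simp
  have Dnz: "up a * um b - um a * up b \<noteq> 0" using DL DLp unfolding Dn_def a_def b_def by auto
  have gn: "Gn n i j = (up a * um i - um a * up i) * (um b * up j - up b * um j) / ((up a * um b - um a * up b) * W0)"
    unfolding Gn_def Gf_def green_def phi_def psi_def Dn_def a_def b_def using ij by simp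
  have g: "G i j = um i * up j / W0" unfolding G_def green_def using ij by simp
  define num where "num = - (up a * up b * um i * um j) - um a * um b * up i * up j + um a * up b * (up i * um j + um i * up j)"
  have eq: "Gn n i j - G i j = num / ((up a * um b - um a * up b) * W0)"
    unfolding gn g num_def by (rule diff_formula[OF Dnz W0_nz])
  have num2: "num = - (up a * up b * um i * um j) - um a * um b * up i * up j + (um a * up b * up i * um j + um a * up b * um i * up j)"
    unfolding num_def by (simp add: algebra_simps)
  have C0: "C \<ge> 0" using B by simp
  have T1: "\<bar>up a * up b * um i * um j\<bar> \<le> C^4 * E (real_of_int a + real_of_int b + - real_of_int i + - real_of_int j)"
    by (rule prod4[OF B(4) B(4) B(6) B(6) C0])
  have T2: "\<bar>um a * um b * up i * up j\<bar> \<le> C^4 * E (- real_of_int a + - real_of_int b + real_of_int i + real_of_int j)"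
    by (rule prod4[OF B(6) B(6) B(4) B(4) C0])
  have T3: "\<bar>um a * up b * up i * um j\<bar> \<le> C^4 * E (- real_of_int a + real_of_int b + real_of_int i + - real_of_int j)"
    by (rule prod4[OF B(6) B(4) B(4) B(6) C0])
  have T4: "\<bar>um a * up b * um i * up j\<bar> \<le> C^4 * E (- real_of_int a + real_of_int b + - real_of_int i + real_of_int j)"
    by (rule prod4[OF B(6) B(4) B(6) B(4) C0])
  have Ek: "C^4 * E s \<le> C^4 * (E X4 * E m)" if "X4 \<le> s - m" for s
  proof -
    have "E s = E (s - m) * E m" using E_add[of "s - m" m] by simp
    also have "\<dots> \<le> E X4 * E m" by (rule mult_right_mono[OF E_mono[OF that]]) (simp add: E_pos less_imp_le)
    finally show ?thesis using C0 by (intro mult_left_mono) auto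
  qed
  have ri: "real_of_int i \<le> real_of_int j" "\<bar>real_of_int i\<bar> \<le> real n" "\<bar>real_of_int j\<bar> \<le> real n"
    using ij by linarith+
  note ex = expo_in[OF ri]
  have x1: "X4 \<le> (real_of_int a + real_of_int b + - real_of_int i + - real_of_int j) - m"
    using ex(1) unfolding X4_def m_def ra rb by linarith
  have x2: "X4 \<le> (- real_of_int a + - real_of_int b + real_of_int i + real_of_int j) - m"
    using ex(2) unfolding X4_def m_def ra rb by linarith
  have x3: "X4 \<le> (- real_of_int a + real_of_int b + real_of_int i + - real_of_int j) - m"
    using ex(3) unfolding X4_def m_def ra rb by linarith
  have x4: "X4 \<le> (- real_of_int a + real_of_int b + - real_of_int i + real_of_int j) - m"
    using ex(4) unfolding X4_def m_def ra rb by linarith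
  have nb: "\<bar>num\<bar> \<le> 4 * (C^4 * (E X4 * E m))"
    using abs4[of "up a * up b * um i * um j" "um a * um b * up i * up j" "um a * up b * up i * um j" "um a * up b * um i * up j"]
      T1 T2 T3 T4 Ek[OF x1] Ek[OF x2] Ek[OF x3] Ek[OF x4] unfolding num2 by linarith
  have den: "\<bar>(up a * um b - um a * up b) * W0\<bar> \<ge> c * c / 2 * E m * \<bar>W0\<bar>"
    using DL unfolding Dn_def a_def b_def abs_mult by (intro mult_right_mono) auto
  have denp: "c * c / 2 * E m * \<bar>W0\<bar> > 0" using DLp W0_nz by simp
  have "\<bar>Gn n i j - G i j\<bar> = \<bar>num\<bar> / \<bar>(up a * um b - um a * up b) * W0\<bar>" unfolding eq by (simp add: abs_divide)
  also have "\<dots> \<le> (4 * (C^4 * (E X4 * E m))) / (c * c / 2 * E m * \<bar>W0\<bar>)"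
    by (rule frac_le[OF _ nb denp den]) (simp add: E_pos less_imp_le)
  also have "\<dots> = (8 * C^4 / (c * c * \<bar>W0\<bar>)) * E X4"
    using E_pos[of m] B W0_nz by (simp add: field_simps)
  finally show ?thesis unfolding X4_def .
qed


lemma Gn_sym: "Gn n i j = Gn n j i" unfolding Gn_def Gf_def by (auto simp: green_sym)
lemma G_sym: "G i j = G j i" unfolding G_def by (rule green_sym)

definition X4 :: "nat \<Rightarrow> int \<Rightarrow> int \<Rightarrow> real" where
  "X4 n i j = (\<bar>real_of_int i - real_of_int j\<bar> + real n - min \<bar>real_of_int i\<bar> \<bar>real_of_int j\<bar>) / 4"

lemma X4_sym: "X4 n i j = X4 n j i" unfolding X4_def by (simp add: abs_minus_commute min.commute)

lemma fs_est: "\<exists>N A. A > 0 \<and> (\<forall>n\<ge>N. Dn n \<noteq> 0 \<and> (\<forall>i j. \<bar>Gn n i j - G i j\<bar> \<le> A * E (X4 n i j)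
    \<and> \<bar>Gn n i j - G i j\<bar> \<le> A * E (\<bar>real_of_int i - real_of_int j\<bar> / 4)))"
proof -
  obtain c C where cC: "ucb c C" using ucb_ex by blast
  have B: "c > 0" "C > 0" using cC unfolding ucb_def by auto
  obtain AG where AG: "AG > 0" "\<And>i j. \<bar>G i j\<bar> \<le> AG * E \<bar>real_of_int i - real_of_int j\<bar>" using G_bound by blast
  define \<delta> where "\<delta> = c * c / (2 * (C * C))"
  have d: "\<delta> > 0" using B by (simp add: \<delta>_def)
  have "(\<lambda>k. rho ^ k) \<longlonglongrightarrow> 0" by (rule LIMSEQ_realpow_zero) (use rho_bounds in auto)
  then have "\<forall>\<^sub>F k in sequentially. rho ^ k < \<delta>" using d by (rule order_tendstoD(2))
  then obtain N where N: "rho ^ N < \<delta>" by (auto simp: eventually_sequentially)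
  define A1 where "A1 = 8 * C^4 / (c * c * \<bar>W0\<bar>)"
  have A1: "A1 > 0" using B W0_nz by (simp add: A1_def)
  define A where "A = max A1 AG"
  have small: "C * C * E (4 * real n + 4) \<le> c * c / 2" if "n \<ge> N" for n
  proof -
    have "E (4 * real n + 4) \<le> E (real N)" by (rule E_mono) (use that in simp)
    also have "E (real N) = rho ^ N" unfolding E_def using rho_bounds by (simp add: powr_realpow)
    finally have "E (4 * real n + 4) \<le> \<delta>" using N by simp
    then have "C * C * E (4 * real n + 4) \<le> C * C * \<delta>" using B by (intro mult_left_mono) auto
    also have "\<dots> = c * c / 2" using B by (simp add: \<delta>_def field_simps)
    finally show ?thesis .
  qed
  have main: "Dn n \<noteq> 0 \<and> (\<forall>i j. \<bar>Gn n i j - G i j\<bar> \<le> A * E (X4 n i j)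
    \<and> \<bar>Gn n i j - G i j\<bar> \<le> A * E (\<bar>real_of_int i - real_of_int j\<bar> / 4))" if n: "n \<ge> N" for n
  proof (intro conjI allI)
    have "\<bar>Dn n\<bar> \<ge> c * c / 2 * E (- (2 * real n + 2))" by (rule Dn_lower[OF cC small[OF n]])
    moreover have "c * c / 2 * E (- (2 * real n + 2)) > 0" using B E_pos by simp
    ultimately show "Dn n \<noteq> 0" by auto
    fix i j
    have Ele: "E (X4 n i j) \<le> E (\<bar>real_of_int i - real_of_int j\<bar> / 4)" if box: "\<bar>i\<bar> \<le> int n" "\<bar>j\<bar> \<le> int n"
    proof (rule E_mono)
      have "min \<bar>real_of_int i\<bar> \<bar>real_of_int j\<bar> \<le> real n" using box by linarith
      then show "\<bar>real_of_int i - real_of_int j\<bar> / 4 \<le> X4 n i j" unfolding X4_def by (simp add: field_simps)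
    qed
    have "\<bar>Gn n i j - G i j\<bar> \<le> A * E (X4 n i j) \<and> \<bar>Gn n i j - G i j\<bar> \<le> A * E (\<bar>real_of_int i - real_of_int j\<bar> / 4)"
    proof (cases "\<bar>i\<bar> \<le> int n \<and> \<bar>j\<bar> \<le> int n")
      case True
      have "\<bar>Gn n i j - G i j\<bar> \<le> A1 * E (X4 n i j)"
      proof (cases "i \<le> j")
        case True2: True
        show ?thesis using box_est[OF cC small[OF n] True2] True unfolding A1_def X4_def by simp
      next
        case False
        have "\<bar>Gn n j i - G j i\<bar> \<le> A1 * E (X4 n j i)"
          using box_est[OF cC small[OF n], of j i] False True unfolding A1_def X4_def by simp
        then show ?thesis by (simp add: Gn_sym G_sym X4_sym)
      qed
      moreover have "A1 * E (X4 n i j) \<le> A * E (X4 n i j)" unfolding A_def by (intro mult_right_mono) (auto simp: E_pos less_imp_le)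
      moreover have "A * E (X4 n i j) \<le> A * E (\<bar>real_of_int i - real_of_int j\<bar> / 4)"
        using Ele True A1 unfolding A_def by (intro mult_left_mono) auto
      ultimately show ?thesis by linarith
    next
      case False
      then have gz: "Gn n i j = 0" unfolding Gn_def by auto
      have rf: "\<not> (\<bar>real_of_int i\<bar> \<le> real n \<and> \<bar>real_of_int j\<bar> \<le> real n)" using False by linarith
      have "X4 n i j \<le> \<bar>real_of_int i - real_of_int j\<bar>" unfolding X4_def by (rule expo_out[OF rf]) simp
      then have e1: "E \<bar>real_of_int i - real_of_int j\<bar> \<le> E (X4 n i j)" by (rule E_mono)
      have e2: "E \<bar>real_of_int i - real_of_int j\<bar> \<le> E (\<bar>real_of_int i - real_of_int j\<bar> / 4)" by (rule E_mono) simp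
      have "\<bar>Gn n i j - G i j\<bar> \<le> AG * E \<bar>real_of_int i - real_of_int j\<bar>" using AG(2)[of i j] gz by simp
      moreover have "AG * E \<bar>real_of_int i - real_of_int j\<bar> \<le> A * E (X4 n i j)"
        using e1 AG(1) unfolding A_def by (intro mult_mono) (auto simp: E_pos less_imp_le)
      moreover have "AG * E \<bar>real_of_int i - real_of_int j\<bar> \<le> A * E (\<bar>real_of_int i - real_of_int j\<bar> / 4)"
        using e2 AG(1) unfolding A_def by (intro mult_mono) (auto simp: E_pos less_imp_le)
      ultimately show ?thesis by linarith
    qed
    then show "\<bar>Gn n i j - G i j\<bar> \<le> A * E (X4 n i j)" "\<bar>Gn n i j - G i j\<bar> \<le> A * E (\<bar>real_of_int i - real_of_int j\<bar> / 4)" by auto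
  qed
  have "A > 0" using A1 unfolding A_def by simp
  then show ?thesis using main by blast
qed

end

lemma powr_convex0:
  assumes p: "p \<ge> (1::real)"
  shows "convex_on {0..} (\<lambda>x::real. x powr p)"
proof (rule convex_on_linorderI)
  show "convex {0::real..}" by simp
  fix t x y :: real
  assume t: "t > 0" "t < 1" and xy: "x \<in> {0..}" "y \<in> {0..}" "x < y"
  show "((1 - t) *\<^sub>R x + t *\<^sub>R y) powr p \<le> (1 - t) * x powr p + t * y powr p"
  proof (cases "x = 0")
    case False
    then have "x \<in> {0<..}" "y \<in> {0<..}" using xy by auto
    then show ?thesis using convex_onD[OF powr_convex[OF p], of t x y] t by simp
  next
    case True
    have "(t * y) powr p = t powr p * y powr p" by (simp add: powr_mult)
    also have "\<dots> \<le> t * y powr p" by (rule mult_right_mono) (use t p powr_le_one_le in auto)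
    finally show ?thesis using True p by simp
  qed
qed

lemma fin_jensen:
  fixes a b :: "'i \<Rightarrow> real"
  assumes F: "finite F" and p: "p \<ge> 1" and a: "\<And>j. j \<in> F \<Longrightarrow> a j \<ge> 0" and b: "\<And>j. j \<in> F \<Longrightarrow> b j \<ge> 0"
  shows "(\<Sum>j\<in>F. a j * b j) powr p \<le> (\<Sum>j\<in>F. a j) powr (p - 1) * (\<Sum>j\<in>F. a j * b j powr p)"
proof (cases "(\<Sum>j\<in>F. a j) = 0")
  case True
  then have "\<forall>j\<in>F. a j = 0" using sum_nonneg_eq_0_iff[OF F] a by blast
  then show ?thesis by simp
next
  case False
  define \<alpha> where "\<alpha> = (\<Sum>j\<in>F. a j)"
  have al: "\<alpha> > 0" using False a unfolding \<alpha>_def by (metis order_le_less sum_nonneg)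
  have Fne: "F \<noteq> {}" using False by auto
  have "(\<Sum>j\<in>F. (a j / \<alpha>) *\<^sub>R b j) powr p \<le> (\<Sum>j\<in>F. (a j / \<alpha>) * b j powr p)"
  proof (rule convex_on_sum[OF F Fne powr_convex0[OF p]])
    show "(\<Sum>j\<in>F. a j / \<alpha>) = 1" using al unfolding \<alpha>_def by (simp add: sum_divide_distrib[symmetric])
  qed (use a b al in auto)
  moreover have "(\<Sum>j\<in>F. (a j / \<alpha>) *\<^sub>R b j) = (\<Sum>j\<in>F. a j * b j) / \<alpha>"
    by (simp add: sum_divide_distrib)
  moreover have "(\<Sum>j\<in>F. (a j / \<alpha>) * b j powr p) = (\<Sum>j\<in>F. a j * b j powr p) / \<alpha>"
    by (simp add: sum_divide_distrib)
  ultimately have "((\<Sum>j\<in>F. a j * b j) / \<alpha>) powr p \<le> (\<Sum>j\<in>F. a j * b j powr p) / \<alpha>" by simp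
  then have "(\<Sum>j\<in>F. a j * b j) powr p / \<alpha> powr p \<le> (\<Sum>j\<in>F. a j * b j powr p) / \<alpha>"
    by (simp add: powr_divide)
  then have "(\<Sum>j\<in>F. a j * b j) powr p \<le> \<alpha> powr p * ((\<Sum>j\<in>F. a j * b j powr p) / \<alpha>)"
    using al by (simp add: divide_le_eq mult.commute)
  also have "\<alpha> powr p * ((\<Sum>j\<in>F. a j * b j powr p) / \<alpha>) = \<alpha> powr (p - 1) * (\<Sum>j\<in>F. a j * b j powr p)"
    using al by (simp add: powr_diff)
  finally show ?thesis unfolding \<alpha>_def .
qed

lemma inf_jensen:
  fixes a b :: "int \<Rightarrow> real"
  assumes p: "p \<ge> 1" and a: "\<And>j. a j \<ge> 0" and b: "\<And>j. b j \<ge> 0" "\<And>j. b j \<le> Bb"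
    and asum: "a summable_on UNIV" and R: "infsum a UNIV \<le> R"
    and absum: "(\<lambda>j. a j * b j powr p) summable_on UNIV"
  shows "(\<lambda>j. a j * b j) summable_on UNIV"
    "(infsum (\<lambda>j. a j * b j) UNIV) powr p \<le> R powr (p - 1) * infsum (\<lambda>j. a j * b j powr p) UNIV"
proof -
  have "(\<lambda>j. a j * Bb) summable_on UNIV" using asum by (rule summable_on_cmult_left)
  then show ab: "(\<lambda>j. a j * b j) summable_on UNIV"
    by (rule summable_on_comparison_test) (use a b in \<open>auto intro: mult_left_mono mult_nonneg_nonneg\<close>)
  define T where "T = infsum (\<lambda>j. a j * b j powr p) UNIV"
  have R0: "R \<ge> 0" using R infsum_nonneg[of UNIV a] a by force
  have fin: "sum (\<lambda>j. a j * b j) F \<le> (R powr (p - 1) * T) powr (1 / p)" if F: "finite F" for F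
  proof -
    have "(\<Sum>j\<in>F. a j * b j) powr p \<le> (\<Sum>j\<in>F. a j) powr (p - 1) * (\<Sum>j\<in>F. a j * b j powr p)"
      by (rule fin_jensen[OF F p]) (use a b in auto)
    also have "\<dots> \<le> R powr (p - 1) * T"
    proof (rule mult_mono)
      have "(\<Sum>j\<in>F. a j) \<le> infsum a UNIV" by (rule finite_sum_le_infsum) (use F asum a in auto)
      then show "(\<Sum>j\<in>F. a j) powr (p - 1) \<le> R powr (p - 1)"
        using R p by (intro powr_mono2) (auto intro: sum_nonneg a)
      show "(\<Sum>j\<in>F. a j * b j powr p) \<le> T" unfolding T_def
        by (rule finite_sum_le_infsum) (use F absum a b in auto)
    qed (use a b in \<open>auto intro: sum_nonneg\<close>)
    finally have h: "(\<Sum>j\<in>F. a j * b j) powr p \<le> R powr (p - 1) * T" .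
    have nn: "(\<Sum>j\<in>F. a j * b j) \<ge> 0" using a b by (auto intro: sum_nonneg)
    have "(\<Sum>j\<in>F. a j * b j) = ((\<Sum>j\<in>F. a j * b j) powr p) powr (1 / p)"
      using nn p by (simp add: powr_powr)
    also have "\<dots> \<le> (R powr (p - 1) * T) powr (1 / p)"
      by (rule powr_mono2) (use h p in auto)
    finally show ?thesis .
  qed
  have "infsum (\<lambda>j. a j * b j) UNIV \<le> (R powr (p - 1) * T) powr (1 / p)"
    by (rule infsum_le_finite_sums[OF ab]) (use fin in auto)
  moreover have "infsum (\<lambda>j. a j * b j) UNIV \<ge> 0" using a b by (auto intro: infsum_nonneg)
  ultimately have "(infsum (\<lambda>j. a j * b j) UNIV) powr p \<le> ((R powr (p - 1) * T) powr (1 / p)) powr p"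
    using p by (intro powr_mono2) auto
  also have "\<dots> = R powr (p - 1) * T"
  proof -
    have "T \<ge> 0" unfolding T_def using a b by (auto intro: infsum_nonneg)
    then show ?thesis using p R0 by (simp add: powr_powr)
  qed
  finally show "(infsum (\<lambda>j. a j * b j) UNIV) powr p \<le> R powr (p - 1) * infsum (\<lambda>j. a j * b j powr p) UNIV"
    unfolding T_def .
qed

lemma geo_half:
  fixes s :: real and g :: "int \<Rightarrow> nat"
  assumes s: "0 < s" "s < 1" and F: "finite F" and inj: "inj_on g F"
  shows "(\<Sum>j\<in>F. s ^ g j) \<le> 1 / (1 - s)"
proof -
  have "(\<Sum>j\<in>F. s ^ g j) = (\<Sum>k\<in>g ` F. s ^ k)" by (rule sum.reindex[OF inj, symmetric, unfolded comp_def])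
  also have "\<dots> \<le> suminf (\<lambda>k. s ^ k)"
    by (rule sum_le_suminf) (use s F in auto)
  also have "\<dots> = 1 / (1 - s)" using s by (simp add: suminf_geometric)
  finally show ?thesis .
qed

lemma geo_int:
  fixes s :: real
  assumes s: "0 < s" "s < 1"
  shows "(\<lambda>j::int. s powr \<bar>real_of_int i - real_of_int j\<bar>) summable_on UNIV"
    "infsum (\<lambda>j::int. s powr \<bar>real_of_int i - real_of_int j\<bar>) UNIV \<le> 2 / (1 - s)"
proof -
  have eq: "s powr \<bar>real_of_int i - real_of_int j\<bar> = s ^ nat \<bar>i - j\<bar>" for j
  proof -
    have "\<bar>real_of_int i - real_of_int j\<bar> = real (nat \<bar>i - j\<bar>)" by simp
    then have "s powr \<bar>real_of_int i - real_of_int j\<bar> = s powr real (nat \<bar>i - j\<bar>)" by simp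
    also have "\<dots> = s ^ nat \<bar>i - j\<bar>" by (rule powr_realpow[OF s(1)])
    finally show ?thesis .
  qed
  have fin: "(\<Sum>j\<in>F. s powr \<bar>real_of_int i - real_of_int j\<bar>) \<le> 2 / (1 - s)" if F: "finite F" for F
  proof -
    define F1 where "F1 = {j\<in>F. i \<le> j}"
    define F2 where "F2 = {j\<in>F. j < i}"
    have FF: "F = F1 \<union> F2" "F1 \<inter> F2 = {}" "finite F1" "finite F2" using F by (auto simp: F1_def F2_def)
    have "(\<Sum>j\<in>F. s powr \<bar>real_of_int i - real_of_int j\<bar>) = (\<Sum>j\<in>F. s ^ nat \<bar>i - j\<bar>)" by (simp add: eq)
    also have "\<dots> = (\<Sum>j\<in>F1. s ^ nat \<bar>i - j\<bar>) + (\<Sum>j\<in>F2. s ^ nat \<bar>i - j\<bar>)"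
      using FF by (simp add: sum.union_disjoint)
    also have "(\<Sum>j\<in>F1. s ^ nat \<bar>i - j\<bar>) = (\<Sum>j\<in>F1. s ^ nat (j - i))"
      by (rule sum.cong) (auto simp: F1_def)
    also have "(\<Sum>j\<in>F2. s ^ nat \<bar>i - j\<bar>) = (\<Sum>j\<in>F2. s ^ nat (i - j))"
      by (rule sum.cong) (auto simp: F2_def)
    also have "(\<Sum>j\<in>F1. s ^ nat (j - i)) \<le> 1 / (1 - s)"
      by (rule geo_half[OF s FF(3)]) (auto simp: inj_on_def F1_def)
    also have "(\<Sum>j\<in>F2. s ^ nat (i - j)) \<le> 1 / (1 - s)"
      by (rule geo_half[OF s FF(4)]) (auto simp: inj_on_def F2_def)
    finally show ?thesis by simp
  qed
  show sm: "(\<lambda>j::int. s powr \<bar>real_of_int i - real_of_int j\<bar>) summable_on UNIV"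
    by (rule nonneg_bdd_above_summable_on) (use fin in \<open>auto intro!: bdd_aboveI2\<close>)
  show "infsum (\<lambda>j::int. s powr \<bar>real_of_int i - real_of_int j\<bar>) UNIV \<le> 2 / (1 - s)"
    by (rule infsum_le_finite_sums[OF sm]) (use fin in auto)
qed

lemma infsum_finsum:
  fixes f :: "'i \<Rightarrow> 'j \<Rightarrow> real"
  assumes I: "finite I" and sm: "\<And>i. i \<in> I \<Longrightarrow> f i summable_on A"
  shows "(\<lambda>j. \<Sum>i\<in>I. f i j) summable_on A \<and> infsum (\<lambda>j. \<Sum>i\<in>I. f i j) A = (\<Sum>i\<in>I. infsum (f i) A)"
  using I sm
proof (induction I rule: finite_induct)
  case empty then show ?case by simp
next
  case (insert x I)
  then have IH: "(\<lambda>j. \<Sum>i\<in>I. f i j) summable_on A" "infsum (\<lambda>j. \<Sum>i\<in>I. f i j) A = (\<Sum>i\<in>I. infsum (f i) A)" by auto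
  have fx: "f x summable_on A" using insert by auto
  show ?case using insert IH fx by (simp add: summable_on_add infsum_add)
qed

definition kop :: "(int \<Rightarrow> int \<Rightarrow> real) \<Rightarrow> (int \<Rightarrow> complex) \<Rightarrow> int \<Rightarrow> complex" where
  "kop k x i = (\<Sum>\<^sub>\<infinity>j. complex_of_real (k i j) * x j)"

definition kbd :: "real \<Rightarrow> real \<Rightarrow> (int \<Rightarrow> int \<Rightarrow> real) \<Rightarrow> bool" where
  "kbd A s k \<longleftrightarrow> 0 < s \<and> s < 1 \<and> A \<ge> 0 \<and> (\<forall>i j. \<bar>k i j\<bar> \<le> A * s powr \<bar>real_of_int i - real_of_int j\<bar>)"

lemma kbd_row:
  assumes kb: "kbd A s k"
  shows "(\<lambda>j. \<bar>k i j\<bar>) summable_on UNIV" "infsum (\<lambda>j. \<bar>k i j\<bar>) UNIV \<le> A * (2 / (1 - s))"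
proof -
  have s: "0 < s" "s < 1" "A \<ge> 0" and k: "\<And>i j. \<bar>k i j\<bar> \<le> A * s powr \<bar>real_of_int i - real_of_int j\<bar>"
    using kb unfolding kbd_def by auto
  have g: "(\<lambda>j. A * s powr \<bar>real_of_int i - real_of_int j\<bar>) summable_on UNIV"
    by (rule summable_on_cmult_right[OF geo_int(1)[OF s(1,2)]])
  show sm: "(\<lambda>j. \<bar>k i j\<bar>) summable_on UNIV"
    by (rule summable_on_comparison_test[OF g]) (use k in auto)
  have "infsum (\<lambda>j. \<bar>k i j\<bar>) UNIV \<le> infsum (\<lambda>j. A * s powr \<bar>real_of_int i - real_of_int j\<bar>) UNIV"
    by (rule infsum_mono[OF sm g]) (use k in auto)
  also have "\<dots> = A * infsum (\<lambda>j. s powr \<bar>real_of_int i - real_of_int j\<bar>) UNIV" by (rule infsum_cmult_right')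
  also have "\<dots> \<le> A * (2 / (1 - s))" by (rule mult_left_mono[OF geo_int(2)[OF s(1,2)] s(3)])
  finally show "infsum (\<lambda>j. \<bar>k i j\<bar>) UNIV \<le> A * (2 / (1 - s))" .
qed

lemma kbd_col:
  assumes kb: "kbd A s k" and F: "finite F"
  shows "(\<Sum>i\<in>F. \<bar>k i j\<bar>) \<le> A * (2 / (1 - s))"
proof -
  have s: "0 < s" "s < 1" "A \<ge> 0" and k: "\<And>i j. \<bar>k i j\<bar> \<le> A * s powr \<bar>real_of_int i - real_of_int j\<bar>"
    using kb unfolding kbd_def by auto
  have "(\<Sum>i\<in>F. \<bar>k i j\<bar>) \<le> (\<Sum>i\<in>F. A * s powr \<bar>real_of_int j - real_of_int i\<bar>)"
    by (rule sum_mono) (use k in \<open>simp add: abs_minus_commute\<close>)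
  also have "\<dots> = A * (\<Sum>i\<in>F. s powr \<bar>real_of_int j - real_of_int i\<bar>)" by (simp add: sum_distrib_left)
  also have "(\<Sum>i\<in>F. s powr \<bar>real_of_int j - real_of_int i\<bar>) \<le> infsum (\<lambda>i. s powr \<bar>real_of_int j - real_of_int i\<bar>) UNIV"
    by (rule finite_sum_le_infsum[OF geo_int(1)[OF s(1,2)] F]) auto
  also have "\<dots> \<le> 2 / (1 - s)" by (rule geo_int(2)[OF s(1,2)])
  finally show ?thesis using s by (simp add: mult_left_mono)
qed

lemma kop_summ:
  assumes kb: "kbd A s k" and xb: "\<And>j. norm (x j) \<le> Bx"
  shows "(\<lambda>j. complex_of_real (k i j) * x j) summable_on UNIV"
    "(\<lambda>j. \<bar>k i j\<bar> * norm (x j)) summable_on UNIV"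
    "norm (kop k x i) \<le> infsum (\<lambda>j. \<bar>k i j\<bar> * norm (x j)) UNIV"
proof -
  have r: "(\<lambda>j. \<bar>k i j\<bar>) summable_on UNIV" by (rule kbd_row[OF kb])
  have r2: "(\<lambda>j. \<bar>k i j\<bar> * Bx) summable_on UNIV" by (rule summable_on_cmult_left[OF r])
  show s2: "(\<lambda>j. \<bar>k i j\<bar> * norm (x j)) summable_on UNIV"
    by (rule summable_on_comparison_test[OF r2]) (use xb in \<open>auto intro: mult_left_mono\<close>)
  have abs: "(\<lambda>j. norm (complex_of_real (k i j) * x j)) summable_on UNIV"
    using s2 by (simp add: norm_mult)
  then show "(\<lambda>j. complex_of_real (k i j) * x j) summable_on UNIV" by (rule abs_summable_summable)
  have "norm (kop k x i) \<le> infsum (\<lambda>j. norm (complex_of_real (k i j) * x j)) UNIV"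
    unfolding kop_def by (rule norm_infsum_bound[OF abs])
  then show "norm (kop k x i) \<le> infsum (\<lambda>j. \<bar>k i j\<bar> * norm (x j)) UNIV" by (simp add: norm_mult)
qed

lemma CL:
  fixes p :: real
  assumes p: "p \<ge> 1" and kb: "kbd A s k" and xb: "\<And>j. norm (x j) \<le> Bx"
    and col: "\<And>j F. finite F \<Longrightarrow> (\<Sum>i\<in>F. \<bar>k i j\<bar>) \<le> c j"
    and cs: "(\<lambda>j. c j * norm (x j) powr p) summable_on UNIV"
  shows "(\<lambda>i. norm (kop k x i) powr p) summable_on UNIV"
    "infsum (\<lambda>i. norm (kop k x i) powr p) UNIV \<le> (A * (2 / (1 - s))) powr (p - 1) * infsum (\<lambda>j. c j * norm (x j) powr p) UNIV"
proof -
  define R where "R = A * (2 / (1 - s))"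
  have s: "0 < s" "s < 1" "A \<ge> 0" and k: "\<And>i j. \<bar>k i j\<bar> \<le> A * s powr \<bar>real_of_int i - real_of_int j\<bar>"
    using kb unfolding kbd_def by auto
  have Bx0: "Bx \<ge> 0" using xb[of 0] norm_ge_zero order_trans by blast
  have absum: "(\<lambda>j. \<bar>k i j\<bar> * norm (x j) powr p) summable_on UNIV" for i
  proof -
    have "(\<lambda>j. \<bar>k i j\<bar> * Bx powr p) summable_on UNIV" by (rule summable_on_cmult_left[OF kbd_row(1)[OF kb]])
    then show ?thesis
      by (rule summable_on_comparison_test) (use xb p in \<open>auto intro!: mult_left_mono powr_mono2\<close>)
  qed
  have pw: "norm (kop k x i) powr p \<le> R powr (p - 1) * infsum (\<lambda>j. \<bar>k i j\<bar> * norm (x j) powr p) UNIV" for i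
  proof -
    have J: "(infsum (\<lambda>j. \<bar>k i j\<bar> * norm (x j)) UNIV) powr p \<le> R powr (p - 1) * infsum (\<lambda>j. \<bar>k i j\<bar> * norm (x j) powr p) UNIV"
      unfolding R_def by (rule inf_jensen(2)[OF p _ _ xb kbd_row[OF kb] absum]) auto
    have "norm (kop k x i) powr p \<le> (infsum (\<lambda>j. \<bar>k i j\<bar> * norm (x j)) UNIV) powr p"
      using kop_summ(3)[OF kb xb, where i=i] p by (intro powr_mono2) auto
    then show ?thesis using J by linarith
  qed
  define T where "T = infsum (\<lambda>j. c j * norm (x j) powr p) UNIV"
  have fin: "(\<Sum>i\<in>I. norm (kop k x i) powr p) \<le> R powr (p - 1) * T" if I: "finite I" for I
  proof -
    have "(\<Sum>i\<in>I. norm (kop k x i) powr p) \<le> (\<Sum>i\<in>I. R powr (p - 1) * infsum (\<lambda>j. \<bar>k i j\<bar> * norm (x j) powr p) UNIV)"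
      by (rule sum_mono[OF pw])
    also have "\<dots> = R powr (p - 1) * (\<Sum>i\<in>I. infsum (\<lambda>j. \<bar>k i j\<bar> * norm (x j) powr p) UNIV)"
      by (simp add: sum_distrib_left)
    also have "(\<Sum>i\<in>I. infsum (\<lambda>j. \<bar>k i j\<bar> * norm (x j) powr p) UNIV) = infsum (\<lambda>j. \<Sum>i\<in>I. \<bar>k i j\<bar> * norm (x j) powr p) UNIV"
      using infsum_finsum[OF I, of "\<lambda>i j. \<bar>k i j\<bar> * norm (x j) powr p" UNIV] absum by simp
    also have "\<dots> \<le> T" unfolding T_def
    proof (rule infsum_mono)
      show "(\<lambda>j. \<Sum>i\<in>I. \<bar>k i j\<bar> * norm (x j) powr p) summable_on UNIV"
        using infsum_finsum[OF I, of "\<lambda>i j. \<bar>k i j\<bar> * norm (x j) powr p" UNIV] absum by simp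
      show "(\<lambda>j. c j * norm (x j) powr p) summable_on UNIV" by (rule cs)
      fix j
      have "(\<Sum>i\<in>I. \<bar>k i j\<bar> * norm (x j) powr p) = (\<Sum>i\<in>I. \<bar>k i j\<bar>) * norm (x j) powr p" by (simp add: sum_distrib_right)
      also have "\<dots> \<le> c j * norm (x j) powr p" by (rule mult_right_mono[OF col[OF I]]) simp
      finally show "(\<Sum>i\<in>I. \<bar>k i j\<bar> * norm (x j) powr p) \<le> c j * norm (x j) powr p" .
    qed
    finally show ?thesis by (simp add: mult_left_mono)
  qed
  show sm: "(\<lambda>i. norm (kop k x i) powr p) summable_on UNIV"
    by (rule nonneg_bdd_above_summable_on) (use fin in \<open>auto intro!: bdd_aboveI2\<close>)
  show "infsum (\<lambda>i. norm (kop k x i) powr p) UNIV \<le> (A * (2 / (1 - s))) powr (p - 1) * infsum (\<lambda>j. c j * norm (x j) powr p) UNIV"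
    using infsum_le_finite_sums[OF sm fin] unfolding R_def T_def by simp
qed

lemma linf_facts:
  assumes "x \<in> lp_space \<infinity>"
  shows "bdd_above (range (\<lambda>k. norm (x k)))" "\<And>j. norm (x j) \<le> lp_norm \<infinity> x"
proof -
  have b: "bounded (range x)" using assms by (simp add: lp_space_def)
  have "bounded ((\<lambda>k. norm (x k)) ` UNIV)" using b bounded_norm_comp[of x UNIV] by simp
  then show bd: "bdd_above (range (\<lambda>k. norm (x k)))" by (rule bounded_imp_bdd_above)
  fix j show "norm (x j) \<le> lp_norm \<infinity> x"
    unfolding lp_norm_def by (simp add: cSUP_upper[OF _ bd])
qed

lemma kop_lp:
  assumes p: "1 \<le> p" and kb: "kbd A s k" and x: "x \<in> lp_space p"
  shows "kop k x \<in> lp_space p" "lp_norm p (kop k x) \<le> A * (2 / (1 - s)) * lp_norm p x"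
proof -
  define R where "R = A * (2 / (1 - s))"
  have sA: "0 < s" "s < 1" "A \<ge> 0" using kb unfolding kbd_def by auto
  have R0: "R \<ge> 0" unfolding R_def using sA by simp
  obtain Bx where Bx: "\<And>j. norm (x j) \<le> Bx" using lp_bounded[OF p x] by blast
  have "kop k x \<in> lp_space p \<and> lp_norm p (kop k x) \<le> R * lp_norm p x"
  proof (cases "p = \<infinity>")
    case True
    define X where "X = lp_norm \<infinity> x"
    have xX: "norm (x j) \<le> X" for j unfolding X_def by (rule linf_facts(2)) (use x True in simp)
    have kb2: "norm (kop k x i) \<le> R * X" for i
    proof -
      have "norm (kop k x i) \<le> infsum (\<lambda>j. \<bar>k i j\<bar> * norm (x j)) UNIV" by (rule kop_summ(3)[OF kb Bx])
      also have "\<dots> \<le> infsum (\<lambda>j. \<bar>k i j\<bar> * X) UNIV"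
        by (rule infsum_mono[OF kop_summ(2)[OF kb Bx] summable_on_cmult_left[OF kbd_row(1)[OF kb]]])
           (use xX in \<open>auto intro: mult_left_mono\<close>)
      also have "\<dots> = infsum (\<lambda>j. \<bar>k i j\<bar>) UNIV * X" by (rule infsum_cmult_left')
      also have "\<dots> \<le> R * X"
      proof (rule mult_right_mono)
        show "infsum (\<lambda>j. \<bar>k i j\<bar>) UNIV \<le> R" unfolding R_def by (rule kbd_row(2)[OF kb])
        show "0 \<le> X" using xX[of 0] norm_ge_zero order_trans by blast
      qed
      finally show ?thesis .
    qed
    have "bounded (range (kop k x))" unfolding bounded_iff using kb2 by blast
    then have "kop k x \<in> lp_space \<infinity>" by (simp add: lp_space_def)
    moreover have "lp_norm \<infinity> (kop k x) \<le> R * X" unfolding lp_norm_def using kb2 by (simp add: cSUP_least)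
    ultimately show ?thesis using True X_def by simp
  next
    case False
    then obtain r where r: "p = ereal r" using p by (cases p) auto
    with p have r1: "r \<ge> 1" by simp
    have xs: "(\<lambda>j. norm (x j) powr r) summable_on UNIV" using x r by (simp add: lp_space_def)
    have cs: "(\<lambda>j. R * norm (x j) powr r) summable_on UNIV" by (rule summable_on_cmult_right[OF xs])
    have col: "\<And>j F. finite F \<Longrightarrow> (\<Sum>i\<in>F. \<bar>k i j\<bar>) \<le> R" unfolding R_def by (rule kbd_col[OF kb])
    note C = CL[OF r1 kb Bx col cs]
    have mem: "kop k x \<in> lp_space p" using C(1) r by (simp add: lp_space_def)
    define Y where "Y = infsum (\<lambda>j. norm (x j) powr r) UNIV"
    have Y0: "Y \<ge> 0" unfolding Y_def by (rule infsum_nonneg) simp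
    have iY: "infsum (\<lambda>j. R * norm (x j) powr r) UNIV = R * Y" unfolding Y_def by (rule infsum_cmult_right')
    have "infsum (\<lambda>i. norm (kop k x i) powr r) UNIV \<le> R powr (r - 1) * (R * Y)"
      using C(2) unfolding R_def[symmetric] iY .
    also have "R powr (r - 1) * (R * Y) = R powr r * Y"
    proof (cases "R = 0")
      case False
      have "R powr (r - 1) * R = R powr (r - 1) * R powr 1" using R0 by (simp add: powr_one)
      also have "\<dots> = R powr (r - 1 + 1)" by (rule powr_add[symmetric])
      finally have "R powr (r - 1) * R = R powr r" by simp
      then show ?thesis by (simp add: mult.assoc[symmetric])
    qed simp
    finally have le: "infsum (\<lambda>i. norm (kop k x i) powr r) UNIV \<le> R powr r * Y" .
    have "lp_norm p (kop k x) = (infsum (\<lambda>i. norm (kop k x i) powr r) UNIV) powr (1 / r)"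
      using r by (simp add: lp_norm_def)
    also have "\<dots> \<le> (R powr r * Y) powr (1 / r)"
      by (rule powr_mono2) (use le r1 in \<open>auto intro: infsum_nonneg\<close>)
    also have "\<dots> = R * Y powr (1 / r)" using R0 r1 by (simp add: powr_mult powr_powr)
    also have "\<dots> = R * lp_norm p x" using r by (simp add: lp_norm_def Y_def)
    finally show ?thesis using mem by simp
  qed
  then show "kop k x \<in> lp_space p" "lp_norm p (kop k x) \<le> A * (2 / (1 - s)) * lp_norm p x"
    unfolding R_def by auto
qed

lemma infsum_delta:
  fixes x :: "int \<Rightarrow> complex"
  shows "(\<Sum>\<^sub>\<infinity>j. complex_of_real (if n = j then 1 else 0) * x j) = x n"
proof -
  have "(\<Sum>\<^sub>\<infinity>j. complex_of_real (if n = j then 1 else 0) * x j) = (\<Sum>\<^sub>\<infinity>j\<in>{n}. complex_of_real (if n = j then 1 else 0) * x j)"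
    by (rule infsum_cong_neutral) auto
  then show ?thesis by simp
qed

lemma lim_zero_const:
  fixes w K rho :: real
  assumes "0 < rho" "rho < 1" "\<And>n. \<bar>w\<bar> \<le> K * rho ^ n"
  shows "w = 0"
proof (rule ccontr)
  assume "w \<noteq> 0"
  have "(\<lambda>n. K * rho ^ n) \<longlonglongrightarrow> K * 0" by (intro tendsto_mult tendsto_const LIMSEQ_realpow_zero) (use assms in auto)
  then have "\<forall>\<^sub>F n in sequentially. K * rho ^ n < \<bar>w\<bar>" using \<open>w \<noteq> 0\<close> by (intro order_tendstoD(2)) auto
  then obtain n where "K * rho ^ n < \<bar>w\<bar>" by (auto simp: eventually_sequentially)
  then show False using assms(3)[of n] by simp
qed

context hyp
begin

lemma G_kbd: "\<exists>A. kbd A rho G"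
proof -
  obtain A where A: "A > 0" "\<And>i j. \<bar>G i j\<bar> \<le> A * E \<bar>real_of_int i - real_of_int j\<bar>" using G_bound by blast
  then show ?thesis unfolding kbd_def E_def using rho_bounds by (intro exI[of _ A]) auto
qed

lemma G_right_inv:
  assumes xb: "\<And>j. norm (x j) \<le> Bx"
  shows "schroedinger v (kop G x) = x"
proof
  fix n
  obtain A where kb: "kbd A rho G" using G_kbd by blast
  have s: "\<And>i. (\<lambda>j. complex_of_real (G i j) * x j) summable_on UNIV" by (rule kop_summ(1)[OF kb xb])
  have "schroedinger v (kop G x) n = kop G x (n+1) + kop G x (n-1) + of_int (v n) * kop G x n"
    unfolding schroedinger_def ..
  also have "\<dots> = (\<Sum>\<^sub>\<infinity>j. complex_of_real (G (n+1) j) * x j + complex_of_real (G (n-1) j) * x j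
      + of_int (v n) * (complex_of_real (G n j) * x j))"
    unfolding kop_def
    by (simp add: infsum_add s summable_on_add summable_on_cmult_right infsum_cmult_right')
  also have "\<dots> = (\<Sum>\<^sub>\<infinity>j. complex_of_real (G (n+1) j + G (n-1) j + real_of_int (v n) * G n j) * x j)"
    by (simp add: algebra_simps)
  also have "\<dots> = (\<Sum>\<^sub>\<infinity>j. complex_of_real (if n = j then 1 else 0) * x j)" by (simp only: G_eq)
  also have "\<dots> = x n" by (rule infsum_delta)
  finally show "schroedinger v (kop G x) n = x n" .
qed

lemma bounded_sol_zero:
  assumes y: "is_sol v y" and yb: "\<And>n. \<bar>y n\<bar> \<le> B"
  shows "y n = 0"
proof -
  obtain c C where cC: "ucb c C" using ucb_ex by blast
  have Bc: "c > 0" "C > 0" "\<And>k. \<bar>up k\<bar> \<le> C * E (real_of_int k)" "\<And>k. \<bar>um k\<bar> \<le> C * E (- real_of_int k)"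
    using cC unfolding ucb_def by auto
  have B0: "B \<ge> 0" using yb[of 0] by linarith
  have Epow: "E (real m) = rho ^ m" for m unfolding E_def using rho_bounds by (simp add: powr_realpow)
  have rp: "0 < rho" "rho < 1" using rho_bounds by auto
  define w1 where "w1 = wr y up 0"
  define w2 where "w2 = wr y um 0"
  have w1c: "wr y up k = w1" for k unfolding w1_def by (rule wr_const[OF y up_sol])
  have w2c: "wr y um k = w2" for k unfolding w2_def by (rule wr_const[OF y um_sol])
  have "w1 = 0"
  proof (rule lim_zero_const[OF rp])
    fix m :: nat
    have "\<bar>w1\<bar> = \<bar>y (int m) * up (int m + 1) - y (int m + 1) * up (int m)\<bar>"
      using w1c[of "int m + 1"] unfolding wr_def by simp
    also have "\<dots> \<le> \<bar>y (int m)\<bar> * \<bar>up (int m + 1)\<bar> + \<bar>y (int m + 1)\<bar> * \<bar>up (int m)\<bar>"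
      by (simp add: abs_mult[symmetric] abs_triangle_ineq4)
    also have "\<dots> \<le> B * (C * E (real m + 1)) + B * (C * E (real m))"
      using Bc(3)[of "int m + 1"] Bc(3)[of "int m"] yb B0
      by (intro add_mono mult_mono) auto
    also have "E (real m + 1) \<le> E (real m)" by (rule E_mono) simp
    then have "B * (C * E (real m + 1)) + B * (C * E (real m)) \<le> (2 * B * C) * rho ^ m"
      using B0 Bc Epow[of m] by (simp add: algebra_simps mult_left_mono)
    finally show "\<bar>w1\<bar> \<le> (2 * B * C) * rho ^ m" .
  qed
  have "w2 = 0"
  proof (rule lim_zero_const[OF rp])
    fix m :: nat
    have "\<bar>w2\<bar> = \<bar>y (- int m - 1) * um (- int m) - y (- int m) * um (- int m - 1)\<bar>"
      using w2c[of "- int m"] unfolding wr_def by simp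
    also have "\<dots> \<le> \<bar>y (- int m - 1)\<bar> * \<bar>um (- int m)\<bar> + \<bar>y (- int m)\<bar> * \<bar>um (- int m - 1)\<bar>"
      by (simp add: abs_mult[symmetric] abs_triangle_ineq4)
    also have "\<dots> \<le> B * (C * E (real m)) + B * (C * E (1 + real m))"
      using Bc(4)[of "- int m"] Bc(4)[of "- int m - 1"] yb B0
      by (intro add_mono mult_mono) auto
    also have "E (1 + real m) \<le> E (real m)" by (rule E_mono) simp
    then have "B * (C * E (real m)) + B * (C * E (1 + real m)) \<le> (2 * B * C) * rho ^ m"
      using B0 Bc Epow[of m] by (simp add: algebra_simps mult_left_mono)
    finally show "\<bar>w2\<bar> \<le> (2 * B * C) * rho ^ m" .
  qed
  have e1: "y (n) * up (n + 1) - y (n + 1) * up n = 0" using w1c[of "n+1"] \<open>w1 = 0\<close> unfolding wr_def by simp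
  have e2: "y (n) * um (n + 1) - y (n + 1) * um n = 0" using w2c[of "n+1"] \<open>w2 = 0\<close> unfolding wr_def by simp
  have "y n * (um n * up (n + 1) - um (n + 1) * up n) = um n * (y n * up (n + 1) - y (n + 1) * up n) - up n * (y n * um (n + 1) - y (n + 1) * um n)"
    by (simp add: algebra_simps)
  also have "\<dots> = 0" using e1 e2 by simp
  finally have z: "y n * (um n * up (n + 1) - um (n + 1) * up n) = 0" .
  have "um n * up (n + 1) - um (n + 1) * up n = W0" using W0_const[of "n+1"] unfolding wr_def by simp
  then have "y n * W0 = 0" using z by simp
  then show "y n = 0" using W0_nz by simp
qed

lemma H_zero:
  assumes Bx: "\<And>j. norm (x j) \<le> Bx" and x0: "schroedinger v x = (\<lambda>_. 0)"
  shows "x = (\<lambda>_. 0)"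
proof -
  have eq: "x (n+1) + x (n-1) + of_int (v n) * x n = 0" for n
    using fun_cong[OF x0, of n] unfolding schroedinger_def by simp
  have sR: "is_sol v (\<lambda>n. Re (x n))" unfolding is_sol_def
    using arg_cong[OF eq, of Re] by simp
  have sI: "is_sol v (\<lambda>n. Im (x n))" unfolding is_sol_def
    using arg_cong[OF eq, of Im] by simp
  have "Re (x n) = 0" for n
    by (rule bounded_sol_zero[OF sR]) (use Bx abs_Re_le_cmod order_trans in blast)
  moreover have "Im (x n) = 0" for n
    by (rule bounded_sol_zero[OF sI]) (use Bx abs_Im_le_cmod order_trans in blast)
  ultimately show ?thesis by (auto simp: complex_eq_iff)
qed

lemma H_inj:
  assumes p: "1 \<le> p"
  shows "inj_on (schroedinger v) (lp_space p)"
proof (rule inj_onI)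
  fix x y assume xy: "x \<in> lp_space p" "y \<in> lp_space p" "schroedinger v x = schroedinger v y"
  obtain Bx where Bx: "\<And>j. norm (x j) \<le> Bx" using lp_bounded[OF p xy(1)] by blast
  obtain By where By: "\<And>j. norm (y j) \<le> By" using lp_bounded[OF p xy(2)] by blast
  define d where "d k = x k - y k" for k
  have db: "norm (d j) \<le> Bx + By" for j unfolding d_def by (rule order_trans[OF norm_triangle_ineq4 add_mono[OF Bx By]])
  have "schroedinger v d = (\<lambda>_. 0)"
  proof
    fix n
    have "schroedinger v x n = schroedinger v y n" using xy(3) by simp
    then show "schroedinger v d n = 0" unfolding schroedinger_def d_def by (simp add: algebra_simps)
  qed
  then have "d = (\<lambda>_. 0)" by (rule H_zero[OF db])
  then show "x = y" unfolding d_def by (auto simp: fun_eq_iff)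
qed

end

context hyp
begin

definition hk :: "int \<Rightarrow> int \<Rightarrow> real" where
  "hk i j = (if j = i + 1 then 1 else 0) + (if j = i - 1 then 1 else 0) + (if j = i then real_of_int (v i) else 0)"

lemma H_kop: "schroedinger v x = kop hk x"
proof
  fix i
  have "kop hk x i = (\<Sum>\<^sub>\<infinity>j\<in>{i-1, i, i+1}. complex_of_real (hk i j) * x j)"
    unfolding kop_def by (rule infsum_cong_neutral) (auto simp: hk_def)
  also have "\<dots> = (\<Sum>j\<in>{i-1, i, i+1}. complex_of_real (hk i j) * x j)" by simp
  also have "\<dots> = x (i+1) + x (i-1) + of_int (v i) * x i" by (simp add: hk_def)
  finally show "schroedinger v x i = kop hk x i" unfolding schroedinger_def by simp
qed

lemma hk_kbd: "\<exists>A. kbd A (1/2) hk"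
proof -
  obtain V where V: "\<And>n. \<bar>real_of_int (v n)\<bar> \<le> V"
    using periodic_bounded[OF K1, of "\<lambda>n. real_of_int (v n)"] per by auto
  have V0: "V \<ge> 0" using V[of 0] by linarith
  have "\<bar>hk i j\<bar> \<le> (2 * (1 + V)) * (1/2) powr \<bar>real_of_int i - real_of_int j\<bar>" for i j
  proof -
    consider "j = i + 1" | "j = i - 1" | "j = i" | "j \<noteq> i + 1 \<and> j \<noteq> i - 1 \<and> j \<noteq> i" by blast
    then show ?thesis
    proof cases
      case 1 then show ?thesis using V0 by (simp add: hk_def)
    next
      case 2 then show ?thesis using V0 by (simp add: hk_def)
    next
      case 3 then show ?thesis using V[of i] V0 by (simp add: hk_def)
    next
      case 4 then show ?thesis using V0 by (simp add: hk_def)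
    qed
  qed
  then show ?thesis unfolding kbd_def using V0 by (intro exI[of _ "2 * (1 + V)"]) auto
qed

lemma H_bl: assumes p: "1 \<le> p" shows "lp_bounded_linear p (schroedinger v)"
proof -
  obtain A where kb: "kbd A (1/2) hk" using hk_kbd by blast
  have "schroedinger v ` lp_space p \<subseteq> lp_space p"
    using kop_lp(1)[OF p kb] unfolding H_kop by blast
  moreover have "\<exists>C. \<forall>x\<in>lp_space p. lp_norm p (schroedinger v x) \<le> C * lp_norm p x"
    using kop_lp(2)[OF p kb] unfolding H_kop by blast
  moreover have "\<forall>x y. schroedinger v (\<lambda>k. x k + y k) = (\<lambda>k. schroedinger v x k + schroedinger v y k)"
    by (auto simp: schroedinger_def fun_eq_iff algebra_simps)
  moreover have "\<forall>c x. schroedinger v (\<lambda>k. c * x k) = (\<lambda>k. c * schroedinger v x k)"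
    by (auto simp: schroedinger_def fun_eq_iff algebra_simps)
  ultimately show ?thesis unfolding lp_bounded_linear_def by blast
qed

lemma G_lp: assumes p: "1 \<le> p" "y \<in> lp_space p" shows "kop G y \<in> lp_space p"
proof -
  obtain A where kb: "kbd A rho G" using G_kbd by blast
  show ?thesis by (rule kop_lp(1)[OF p(1) kb p(2)])
qed

lemma H_inv: assumes p: "1 \<le> p" shows "lp_invertible p (schroedinger v)"
proof -
  have "lp_space p \<subseteq> schroedinger v ` lp_space p"
  proof
    fix y assume y: "y \<in> lp_space p"
    obtain By where By: "\<And>j. norm (y j) \<le> By" using lp_bounded[OF p y] by blast
    have "y = schroedinger v (kop G y)" using G_right_inv[OF By] by simp
    then show "y \<in> schroedinger v ` lp_space p" using G_lp[OF p y] by blast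
  qed
  moreover have "schroedinger v ` lp_space p \<subseteq> lp_space p"
    using H_bl[OF p] unfolding lp_bounded_linear_def by blast
  ultimately have "bij_betw (schroedinger v) (lp_space p) (lp_space p)"
    unfolding bij_betw_def using H_inj[OF p] by blast
  then show ?thesis unfolding lp_invertible_def using H_bl[OF p] by blast
qed

lemma H_inv_formula:
  assumes p: "1 \<le> p" and y: "y \<in> lp_space p"
  shows "inv_into (lp_space p) (schroedinger v) y = kop G y"
proof (rule inv_into_f_eq[OF H_inj[OF p] G_lp[OF p y]])
  obtain By where By: "\<And>j. norm (y j) \<le> By" using lp_bounded[OF p y] by blast
  show "schroedinger v (kop G y) = y" by (rule G_right_inv[OF By])
qed

end

context hyp
begin

lemma Gn_outside: "\<not> (\<bar>i\<bar> \<le> int n \<and> \<bar>j\<bar> \<le> int n) \<Longrightarrow> Gn n i j = 0"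
  unfolding Gn_def by auto

lemma kopGn_sum: "kop (Gn n) x i = (\<Sum>j\<in>{- int n..int n}. complex_of_real (Gn n i j) * x j)"
proof -
  have "kop (Gn n) x i = (\<Sum>\<^sub>\<infinity>j\<in>{- int n..int n}. complex_of_real (Gn n i j) * x j)"
    unfolding kop_def by (rule infsum_cong_neutral) (auto simp: Gn_outside)
  then show ?thesis by simp
qed

lemma Gn_col:
  assumes D: "Dn n \<noteq> 0" and i: "\<bar>i\<bar> \<le> int n" and j: "\<bar>j\<bar> \<le> int n"
  shows "Gn n (i+1) j + Gn n (i-1) j + real_of_int (v i) * Gn n i j = (if i = j then 1 else 0)"
proof -
  have a: "Gn n (i+1) j = Gf n (i+1) j"
  proof (cases "\<bar>i+1\<bar> \<le> int n")
    case True then show ?thesis using j by (simp add: Gn_def)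
  next
    case False then have "i + 1 = int n + 1" using i by auto
    then show ?thesis using Gf_right[where j=j and n=n] j False by (simp add: Gn_def)
  qed
  have b: "Gn n (i-1) j = Gf n (i-1) j"
  proof (cases "\<bar>i-1\<bar> \<le> int n")
    case True then show ?thesis using j by (simp add: Gn_def)
  next
    case False then have "i - 1 = - int n - 1" using i by auto
    then show ?thesis using Gf_left[where j=j and n=n] j False by (simp add: Gn_def)
  qed
  have c: "Gn n i j = Gf n i j" using i j by (simp add: Gn_def)
  show ?thesis unfolding a b c by (rule Gf_eq[OF D])
qed

lemma fs_apply:
  assumes D: "Dn n \<noteq> 0"
  shows "finite_section (schroedinger v) n (kop (Gn n) x) = proj n x"
proof
  fix i
  define S where "S = {- int n..int n}"
  have ks: "kop (Gn n) x k = (\<Sum>j\<in>S. complex_of_real (Gn n k j) * x j)" for k unfolding S_def by (rule kopGn_sum)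
  have pr: "proj n (kop (Gn n) x) = kop (Gn n) x"
    by (rule ext) (auto simp: proj_def ks S_def Gn_outside)
  show "finite_section (schroedinger v) n (kop (Gn n) x) i = proj n x i"
  proof (cases "\<bar>i\<bar> \<le> int n")
    case True
    have tm: "complex_of_real (Gn n (i+1) j) * x j + complex_of_real (Gn n (i-1) j) * x j
        + of_int (v i) * (complex_of_real (Gn n i j) * x j) = (if i = j then x j else 0)" if j: "j \<in> S" for j
    proof -
      have jj: "\<bar>j\<bar> \<le> int n" using j unfolding S_def by auto
      have e: "Gn n (i+1) j + Gn n (i-1) j + real_of_int (v i) * Gn n i j = (if i = j then 1 else 0)"
        by (rule Gn_col[OF D True jj])
      have "complex_of_real (Gn n (i+1) j) + complex_of_real (Gn n (i-1) j) + of_int (v i) * complex_of_real (Gn n i j)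
          = complex_of_real (if i = j then 1 else 0)"
        unfolding e[symmetric] by simp
      then have "(complex_of_real (Gn n (i+1) j) + complex_of_real (Gn n (i-1) j) + of_int (v i) * complex_of_real (Gn n i j)) * x j
          = complex_of_real (if i = j then 1 else 0) * x j" by simp
      then show ?thesis by (cases "i = j") (simp_all add: algebra_simps)
    qed
    have "schroedinger v (kop (Gn n) x) i
        = (\<Sum>j\<in>S. complex_of_real (Gn n (i+1) j) * x j + complex_of_real (Gn n (i-1) j) * x j
          + of_int (v i) * (complex_of_real (Gn n i j) * x j))"
      unfolding schroedinger_def ks by (simp add: sum.distrib sum_distrib_left)
    also have "\<dots> = (\<Sum>j\<in>S. (if i = j then x j else 0))"
      by (rule sum.cong[OF refl tm])
    also have "\<dots> = x i"
    proof -
      have "i \<in> S" using True unfolding S_def by auto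
      then show ?thesis by (subst sum.delta') (auto simp: S_def)
    qed
    finally show ?thesis unfolding finite_section_def pr using True by (simp add: proj_def)
  next
    case False
    then show ?thesis unfolding finite_section_def by (simp add: proj_def)
  qed
qed

lemma kopGn_dom: "kop (Gn n) x \<in> fs_dom n"
  unfolding fs_dom_def by (auto simp: kopGn_sum Gn_outside)

lemma fs_zero:
  assumes D: "Dn n \<noteq> 0" and y: "y \<in> fs_dom n" and fy: "finite_section (schroedinger v) n y = (\<lambda>_. 0)"
  shows "y = (\<lambda>_. 0)"
proof -
  define a where "a = - int n - 1"
  have yo: "\<bar>k\<bar> > int n \<Longrightarrow> y k = 0" for k using y unfolding fs_dom_def by auto
  have py: "proj n y = y" by (rule ext) (auto simp: proj_def yo)
  have Hy: "y (i+1) + y (i-1) + of_int (v i) * y i = 0" if "\<bar>i\<bar> \<le> int n" for i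
    using fun_cong[OF fy, of i] that unfolding finite_section_def py by (simp add: proj_def schroedinger_def)
  have phi1: "phi n (a + 1) \<noteq> 0" using phi_a1[of n] W0_nz unfolding a_def by simp
  define l where "l = y (a + 1) / complex_of_real (phi n (a + 1))"
  have P: "y (a + int k) = l * phi n (a + int k) \<and> y (a + int k + 1) = l * phi n (a + int k + 1)" if "k \<le> 2 * n + 1" for k
    using that
  proof (induction k)
    case 0
    have "y a = 0" using yo[of a] unfolding a_def by simp
    then show ?case using phi1 phi_a[of n] unfolding l_def a_def by simp
  next
    case (Suc k)
    then have IH: "y (a + int k) = l * phi n (a + int k)" "y (a + int k + 1) = l * phi n (a + int k + 1)" by auto
    define i where "i = a + int k + 1"
    have ii: "\<bar>i\<bar> \<le> int n" using Suc.prems unfolding i_def a_def by auto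
    have ik: "i - 1 = a + int k" "a + int (Suc k) = i" "a + int (Suc k) + 1 = i + 1" unfolding i_def by auto
    have IH1: "y (i - 1) = l * phi n (i - 1)" using IH(1) ik(1) by simp
    have IH2: "y i = l * phi n i" using IH(2) unfolding i_def by simp
    have ph: "phi n (i + 1) = - phi n (i - 1) - real_of_int (v i) * phi n i"
      using phi_sol[of n] unfolding is_sol_def by (auto simp: algebra_simps dest: spec[where x=i])
    have "y (i + 1) = (y (i + 1) + y (i - 1) + of_int (v i) * y i) - y (i - 1) - of_int (v i) * y i" by simp
    also have "\<dots> = - y (i - 1) - of_int (v i) * y i" using Hy[OF ii] by simp
    also have "\<dots> = - (l * phi n (i - 1)) - of_int (v i) * (l * phi n i)" unfolding IH1 IH2 ..
    also have "\<dots> = l * complex_of_real (- phi n (i - 1) - real_of_int (v i) * phi n i)" by (simp add: algebra_simps)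
    also have "\<dots> = l * phi n (i + 1)" unfolding ph ..
    finally have "y (i + 1) = l * phi n (i + 1)" .
    then show ?case unfolding ik(3) ik(2) using IH2 by simp
  qed
  have e: "y (a + int (2 * n + 1) + 1) = l * phi n (a + int (2 * n + 1) + 1)" using P[of "2 * n + 1"] by blast
  have ab: "a + int (2 * n + 1) + 1 = int n + 1" unfolding a_def by simp
  have "y (int n + 1) = l * Dn n" using e unfolding ab phi_b .
  moreover have "y (int n + 1) = 0" using yo[of "int n + 1"] by simp
  ultimately have l0: "l = 0" using D by simp
  show ?thesis
  proof
    fix k
    show "y k = 0"
    proof (cases "\<bar>k\<bar> \<le> int n")
      case True
      define m where "m = nat (k - a)"
      have "m \<le> 2 * n + 1" "a + int m = k" using True unfolding m_def a_def by auto
      then show ?thesis using P[of m] l0 by simp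
    next
      case False then show ?thesis using yo by simp
    qed
  qed
qed

lemma fs_inv:
  assumes D: "Dn n \<noteq> 0"
  shows "fs_invertible (schroedinger v) n"
proof -
  let ?f = "finite_section (schroedinger v) n"
  have lin: "?f (\<lambda>k. y1 k - y2 k) = (\<lambda>k. ?f y1 k - ?f y2 k)" for y1 y2
    by (rule ext) (auto simp: finite_section_def proj_def schroedinger_def algebra_simps)
  have inj: "inj_on ?f (fs_dom n)"
  proof (rule inj_onI)
    fix y1 y2 assume y: "y1 \<in> fs_dom n" "y2 \<in> fs_dom n" "?f y1 = ?f y2"
    have d: "(\<lambda>k. y1 k - y2 k) \<in> fs_dom n" using y unfolding fs_dom_def by auto
    have "?f (\<lambda>k. y1 k - y2 k) = (\<lambda>_. 0)" unfolding lin using y(3) by simp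
    then have "(\<lambda>k. y1 k - y2 k) = (\<lambda>_. 0)" by (rule fs_zero[OF D d])
    then show "y1 = y2" by (auto simp: fun_eq_iff)
  qed
  have "?f ` fs_dom n \<subseteq> fs_dom n" unfolding finite_section_def fs_dom_def proj_def by auto
  moreover have "fs_dom n \<subseteq> ?f ` fs_dom n"
  proof
    fix z assume z: "z \<in> fs_dom n"
    have "proj n z = z" using z unfolding fs_dom_def proj_def by (auto simp: fun_eq_iff)
    then have "?f (kop (Gn n) z) = z" using fs_apply[OF D, of z] by simp
    then show "z \<in> ?f ` fs_dom n" using kopGn_dom by (metis image_eqI)
  qed
  ultimately show ?thesis unfolding fs_invertible_def bij_betw_def using inj by blast
qed

lemma fs_inv_formula:
  assumes D: "Dn n \<noteq> 0"
  shows "fs_inverse_embedded (schroedinger v) n x = kop (Gn n) x"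
proof -
  have ij: "inj_on (finite_section (schroedinger v) n) (fs_dom n)"
    using fs_inv[OF D] unfolding fs_invertible_def bij_betw_def by blast
  show ?thesis unfolding fs_inverse_embedded_def
    by (rule inv_into_f_eq) (use ij kopGn_dom fs_apply[OF D] in auto)
qed

end

lemma tail_zero:
  fixes y :: "int \<Rightarrow> real" and s :: real
  assumes y0: "\<And>j. y j \<ge> 0" and ys: "y summable_on UNIV" and s: "0 < s" "s < 1"
  shows "(\<lambda>n::nat. infsum (\<lambda>j. min 1 (s powr (real n - \<bar>real_of_int j\<bar>)) * y j) UNIV) \<longlonglongrightarrow> 0"
proof (rule order_tendstoI)
  define T where "T n = infsum (\<lambda>j. min 1 (s powr (real n - \<bar>real_of_int j\<bar>)) * y j) UNIV" for n :: nat
  have T0: "T n \<ge> 0" for n unfolding T_def by (rule infsum_nonneg) (use y0 in auto)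
  fix a :: real
  show "a < 0 \<Longrightarrow> \<forall>\<^sub>F n in sequentially. a < infsum (\<lambda>j. min 1 (s powr (real n - \<bar>real_of_int j\<bar>)) * y j) UNIV"
  proof -
    assume "a < 0"
    then have "\<forall>n. a < T n" using T0 by (meson less_le_trans)
    then show ?thesis unfolding T_def by (simp add: always_eventually)
  qed
  assume a: "a > 0"
  define Y where "Y = infsum y UNIV"
  obtain F where F: "finite F" "dist (sum y F) Y \<le> a / 3"
    using infsum_finite_approximation[OF ys, of "a/3"] a unfolding Y_def by auto
  obtain M where M: "\<forall>j\<in>F. \<bar>j\<bar> \<le> M"
    using F(1) finite_int_iff_bounded_le by (metis image_subset_iff atMost_iff)
  define yF where "yF j = (if j \<in> F then y j else 0)" for j
  define yN where "yN j = (if j \<in> F then 0 else y j)" for j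
  have yFs: "yF summable_on UNIV" by (rule finite_support_summable[OF F(1)]) (simp add: yF_def)
  have yNs: "yN summable_on UNIV" by (rule summable_on_comparison_test[OF ys]) (use y0 in \<open>auto simp: yN_def\<close>)
  have iF: "infsum yF UNIV = sum y F"
  proof -
    have "infsum yF UNIV = infsum yF F" by (rule infsum_cong_neutral) (auto simp: yF_def)
    then show ?thesis using F(1) by (simp add: yF_def)
  qed
  have "Y = infsum (\<lambda>j. yF j + yN j) UNIV" unfolding Y_def by (rule arg_cong[where f="\<lambda>f. infsum f UNIV"]) (auto simp: yF_def yN_def)
  also have "\<dots> = sum y F + infsum yN UNIV" by (simp add: infsum_add[OF yFs yNs] iF)
  finally have iN: "infsum yN UNIV \<le> a / 3" using F(2) by (simp add: dist_real_def)
  have Y0: "Y \<ge> 0" unfolding Y_def by (rule infsum_nonneg) (use y0 in auto)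
  define c where "c = s powr (- real_of_int M) * Y"
  have c0: "c \<ge> 0" unfolding c_def using Y0 by simp
  have "(\<lambda>n. s ^ n * c) \<longlonglongrightarrow> 0 * c" by (intro tendsto_mult tendsto_const LIMSEQ_realpow_zero) (use s in auto)
  then have "\<forall>\<^sub>F n in sequentially. s ^ n * c < a / 3" using a by (intro order_tendstoD(2)) auto
  then show "\<forall>\<^sub>F n in sequentially. infsum (\<lambda>j. min 1 (s powr (real n - \<bar>real_of_int j\<bar>)) * y j) UNIV < a"
  proof (rule eventually_mono)
    fix n :: nat assume n: "s ^ n * c < a / 3"
    have pt: "min 1 (s powr (real n - \<bar>real_of_int j\<bar>)) * y j \<le> (s ^ n * s powr (- real_of_int M)) * y j + yN j" for j
    proof (cases "j \<in> F")
      case True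
      have "s powr (real n - \<bar>real_of_int j\<bar>) \<le> s powr (real n - real_of_int M)"
        using M True s by (intro powr_mono') auto
      also have "\<dots> = s ^ n * s powr (- real_of_int M)" using s by (simp add: powr_add[symmetric] powr_realpow[symmetric])
      finally have "min 1 (s powr (real n - \<bar>real_of_int j\<bar>)) \<le> s ^ n * s powr (- real_of_int M)" by linarith
      then show ?thesis using y0[of j] True by (simp add: yN_def mult_right_mono)
    next
      case False
      have "min 1 (s powr (real n - \<bar>real_of_int j\<bar>)) * y j \<le> 1 * y j" using y0[of j] by (intro mult_right_mono) auto
      moreover have "0 \<le> (s ^ n * s powr (- real_of_int M)) * y j" using y0[of j] s by simp
      ultimately show ?thesis using False by (simp add: yN_def)
    qed
    have s1: "(\<lambda>j. min 1 (s powr (real n - \<bar>real_of_int j\<bar>)) * y j) summable_on UNIV"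
      by (rule summable_on_comparison_test[OF ys]) (use y0 in \<open>auto intro: mult_left_le_one_le\<close>)
    have s2: "(\<lambda>j. (s ^ n * s powr (- real_of_int M)) * y j + yN j) summable_on UNIV"
      by (intro summable_on_add summable_on_cmult_right ys yNs)
    have "infsum (\<lambda>j. min 1 (s powr (real n - \<bar>real_of_int j\<bar>)) * y j) UNIV
        \<le> infsum (\<lambda>j. (s ^ n * s powr (- real_of_int M)) * y j + yN j) UNIV"
      by (rule infsum_mono[OF s1 s2 pt])
    also have "\<dots> = s ^ n * c + infsum yN UNIV"
      by (simp add: infsum_add summable_on_cmult_right ys yNs infsum_cmult_right' c_def Y_def mult.assoc)
    also have "\<dots> < a" using n iN a by linarith
    finally show "infsum (\<lambda>j. min 1 (s powr (real n - \<bar>real_of_int j\<bar>)) * y j) UNIV < a" .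
  qed
qed

lemma kop_diff:
  assumes k1: "kbd A1 s1 k1" and k2: "kbd A2 s2 k2" and xb: "\<And>j. norm (x j) \<le> Bx"
  shows "kop k1 x i - kop k2 x i = kop (\<lambda>i j. k1 i j - k2 i j) x i"
proof -
  have a: "(\<lambda>j. complex_of_real (k1 i j) * x j) summable_on UNIV" by (rule kop_summ(1)[OF k1 xb])
  have b: "(\<lambda>j. - (complex_of_real (k2 i j) * x j)) summable_on UNIV"
    using kop_summ(1)[OF k2 xb, of i] by (simp add: summable_on_uminus)
  have "kop k1 x i - kop k2 x i = kop k1 x i + (\<Sum>\<^sub>\<infinity>j. - (complex_of_real (k2 i j) * x j))"
    unfolding kop_def by (simp add: infsum_uminus)
  also have "\<dots> = (\<Sum>\<^sub>\<infinity>j. complex_of_real (k1 i j) * x j + - (complex_of_real (k2 i j) * x j))"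
    unfolding kop_def by (rule infsum_add[OF a b, symmetric])
  also have "\<dots> = kop (\<lambda>i j. k1 i j - k2 i j) x i" unfolding kop_def by (simp add: algebra_simps)
  finally show ?thesis .
qed

context hyp
begin

definition s4 :: real where "s4 = rho powr (1/4)"

lemma s4_bounds: "0 < s4" "s4 < 1"
proof -
  show "0 < s4" unfolding s4_def using rho_bounds by simp
  have "rho powr (1/4) < 1 powr (1/4)" by (rule powr_less_mono2) (use rho_bounds in auto)
  then show "s4 < 1" unfolding s4_def by simp
qed

lemma E4: "E (y / 4) = s4 powr y" unfolding E_def s4_def powr_powr by simp

definition Kn :: "nat \<Rightarrow> int \<Rightarrow> int \<Rightarrow> real" where "Kn n i j = Gn n i j - G i j"

lemma Kn_facts: "\<exists>N A. A > 0 \<and> (\<forall>n\<ge>N. Dn n \<noteq> 0 \<and> kbd A s4 (Kn n) \<and> kbd A s4 (Gn n) \<and> kbd A s4 G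
   \<and> (\<forall>i j. \<bar>Kn n i j\<bar> \<le> A * s4 powr \<bar>real_of_int i - real_of_int j\<bar> * s4 powr (real n - \<bar>real_of_int i\<bar>))
   \<and> (\<forall>i j. \<bar>Kn n i j\<bar> \<le> A * s4 powr \<bar>real_of_int i - real_of_int j\<bar> * s4 powr (real n - \<bar>real_of_int j\<bar>)))"
proof -
  obtain N A where A: "A > 0" "\<forall>n\<ge>N. Dn n \<noteq> 0 \<and> (\<forall>i j. \<bar>Gn n i j - G i j\<bar> \<le> A * E (X4 n i j)
    \<and> \<bar>Gn n i j - G i j\<bar> \<le> A * E (\<bar>real_of_int i - real_of_int j\<bar> / 4))" using fs_est by blast
  obtain AG where AG: "AG > 0" "\<And>i j. \<bar>G i j\<bar> \<le> AG * E \<bar>real_of_int i - real_of_int j\<bar>" using G_bound by blast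
  define B where "B = A + AG"
  have B: "B > 0" "A \<le> B" "AG \<le> B" using A AG unfolding B_def by auto
  have s: "0 < s4" "s4 < 1" by (rule s4_bounds)+
  have Gs: "\<bar>G i j\<bar> \<le> AG * s4 powr \<bar>real_of_int i - real_of_int j\<bar>" for i j
  proof -
    have "E \<bar>real_of_int i - real_of_int j\<bar> \<le> E (\<bar>real_of_int i - real_of_int j\<bar> / 4)" by (rule E_mono) simp
    then show ?thesis using AG(2)[of i j] AG(1) unfolding E4 by (meson mult_left_mono less_imp_le order_trans)
  qed
  have main: "Dn n \<noteq> 0 \<and> kbd B s4 (Kn n) \<and> kbd B s4 (Gn n) \<and> kbd B s4 G
   \<and> (\<forall>i j. \<bar>Kn n i j\<bar> \<le> B * s4 powr \<bar>real_of_int i - real_of_int j\<bar> * s4 powr (real n - \<bar>real_of_int i\<bar>))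
   \<and> (\<forall>i j. \<bar>Kn n i j\<bar> \<le> B * s4 powr \<bar>real_of_int i - real_of_int j\<bar> * s4 powr (real n - \<bar>real_of_int j\<bar>))"
    if n: "n \<ge> N" for n
  proof -
    have An: "Dn n \<noteq> 0" "\<And>i j. \<bar>Kn n i j\<bar> \<le> A * E (X4 n i j)"
      "\<And>i j. \<bar>Kn n i j\<bar> \<le> A * s4 powr \<bar>real_of_int i - real_of_int j\<bar>"
      using A(2) n unfolding Kn_def E4[symmetric] by auto
    have K1: "\<bar>Kn n i j\<bar> \<le> B * s4 powr \<bar>real_of_int i - real_of_int j\<bar>" for i j
      using An(3)[of i j] B(2) by (meson mult_right_mono powr_ge_zero order_trans)
    have Xi: "E (X4 n i j) \<le> s4 powr \<bar>real_of_int i - real_of_int j\<bar> * s4 powr (real n - \<bar>real_of_int i\<bar>)" for i j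
    proof -
      have "E (X4 n i j) \<le> E ((\<bar>real_of_int i - real_of_int j\<bar> + (real n - \<bar>real_of_int i\<bar>)) / 4)"
        by (rule E_mono) (simp add: X4_def field_simps min_def)
      also have "\<dots> = s4 powr \<bar>real_of_int i - real_of_int j\<bar> * s4 powr (real n - \<bar>real_of_int i\<bar>)"
        unfolding E4 by (simp add: powr_add)
      finally show ?thesis .
    qed
    have Xj: "E (X4 n i j) \<le> s4 powr \<bar>real_of_int i - real_of_int j\<bar> * s4 powr (real n - \<bar>real_of_int j\<bar>)" for i j
    proof -
      have "E (X4 n i j) \<le> E ((\<bar>real_of_int i - real_of_int j\<bar> + (real n - \<bar>real_of_int j\<bar>)) / 4)"
        by (rule E_mono) (simp add: X4_def field_simps min_def)
      also have "\<dots> = s4 powr \<bar>real_of_int i - real_of_int j\<bar> * s4 powr (real n - \<bar>real_of_int j\<bar>)"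
        unfolding E4 by (simp add: powr_add)
      finally show ?thesis .
    qed
    have K2: "\<bar>Kn n i j\<bar> \<le> B * s4 powr \<bar>real_of_int i - real_of_int j\<bar> * s4 powr (real n - \<bar>real_of_int i\<bar>)" for i j
    proof -
      have "\<bar>Kn n i j\<bar> \<le> A * (s4 powr \<bar>real_of_int i - real_of_int j\<bar> * s4 powr (real n - \<bar>real_of_int i\<bar>))"
        using An(2)[of i j] Xi[of i j] A(1) by (meson mult_left_mono less_imp_le order_trans)
      also have "\<dots> \<le> B * (s4 powr \<bar>real_of_int i - real_of_int j\<bar> * s4 powr (real n - \<bar>real_of_int i\<bar>))"
        using B(2) by (intro mult_right_mono) auto
      finally show ?thesis by (simp add: mult.assoc)
    qed
    have K3: "\<bar>Kn n i j\<bar> \<le> B * s4 powr \<bar>real_of_int i - real_of_int j\<bar> * s4 powr (real n - \<bar>real_of_int j\<bar>)" for i j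
    proof -
      have "\<bar>Kn n i j\<bar> \<le> A * (s4 powr \<bar>real_of_int i - real_of_int j\<bar> * s4 powr (real n - \<bar>real_of_int j\<bar>))"
        using An(2)[of i j] Xj[of i j] A(1) by (meson mult_left_mono less_imp_le order_trans)
      also have "\<dots> \<le> B * (s4 powr \<bar>real_of_int i - real_of_int j\<bar> * s4 powr (real n - \<bar>real_of_int j\<bar>))"
        using B(2) by (intro mult_right_mono) auto
      finally show ?thesis by (simp add: mult.assoc)
    qed
    have G1: "\<bar>G i j\<bar> \<le> B * s4 powr \<bar>real_of_int i - real_of_int j\<bar>" for i j
      using Gs[of i j] B(3) by (meson mult_right_mono powr_ge_zero order_trans)
    have "kbd B s4 (Kn n)" unfolding kbd_def using s B K1 by auto
    moreover have "kbd B s4 G" unfolding kbd_def using s B G1 by auto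
    moreover have "kbd (A + AG) s4 (Gn n)"
    proof -
      have "\<bar>Gn n i j\<bar> \<le> (A + AG) * s4 powr \<bar>real_of_int i - real_of_int j\<bar>" for i j
      proof -
        have "\<bar>Gn n i j\<bar> \<le> \<bar>Kn n i j\<bar> + \<bar>G i j\<bar>" unfolding Kn_def by linarith
        then show ?thesis using An(3)[of i j] Gs[of i j] by (simp add: algebra_simps)
      qed
      then show ?thesis unfolding kbd_def using s A AG by auto
    qed
    ultimately show ?thesis using An(1) K2 K3 unfolding B_def by auto
  qed
  show ?thesis using main B(1) by blast
qed

end

lemma kop_pt:
  assumes kb: "kbd A s k" and xb: "\<And>j. norm (x j) \<le> Bx"
    and pt: "\<And>j. \<bar>k i j\<bar> * norm (x j) \<le> A' * s powr \<bar>real_of_int i - real_of_int j\<bar>" and A': "A' \<ge> 0"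
  shows "norm (kop k x i) \<le> A' * (2 / (1 - s))"
proof -
  have s: "0 < s" "s < 1" using kb unfolding kbd_def by auto
  have g: "(\<lambda>j. A' * s powr \<bar>real_of_int i - real_of_int j\<bar>) summable_on UNIV"
    by (rule summable_on_cmult_right[OF geo_int(1)[OF s]])
  have "norm (kop k x i) \<le> infsum (\<lambda>j. \<bar>k i j\<bar> * norm (x j)) UNIV" by (rule kop_summ(3)[OF kb xb])
  also have "\<dots> \<le> infsum (\<lambda>j. A' * s powr \<bar>real_of_int i - real_of_int j\<bar>) UNIV"
    by (rule infsum_mono[OF kop_summ(2)[OF kb xb] g pt])
  also have "\<dots> = A' * infsum (\<lambda>j. s powr \<bar>real_of_int i - real_of_int j\<bar>) UNIV" by (rule infsum_cmult_right')
  also have "\<dots> \<le> A' * (2 / (1 - s))" by (rule mult_left_mono[OF geo_int(2)[OF s] A'])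
  finally show ?thesis .
qed

lemma lp_norm_inf_le:
  assumes "\<And>i. norm (z i) \<le> M"
  shows "lp_norm \<infinity> z \<le> M"
  unfolding lp_norm_def using assms by (simp add: cSUP_least)

context hyp
begin

lemma sc_fin:
  assumes r: "r \<ge> 1"
  shows "strongly_converges (ereal r) (fs_inverse_embedded (schroedinger v)) (inv_into (lp_space (ereal r)) (schroedinger v))"
proof -
  obtain N B where NB: "B > 0" "\<And>n. n \<ge> N \<Longrightarrow> Dn n \<noteq> 0 \<and> kbd B s4 (Kn n) \<and> kbd B s4 (Gn n) \<and> kbd B s4 G
   \<and> (\<forall>i j. \<bar>Kn n i j\<bar> \<le> B * s4 powr \<bar>real_of_int i - real_of_int j\<bar> * s4 powr (real n - \<bar>real_of_int i\<bar>))
   \<and> (\<forall>i j. \<bar>Kn n i j\<bar> \<le> B * s4 powr \<bar>real_of_int i - real_of_int j\<bar> * s4 powr (real n - \<bar>real_of_int j\<bar>))"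
    using Kn_facts by blast
  have s: "0 < s4" "s4 < 1" by (rule s4_bounds)+
  define R where "R = B * (2 / (1 - s4))"
  have R0: "R > 0" unfolding R_def using NB(1) s by simp
  have p1: "1 \<le> ereal r" using r by simp
  have "((\<lambda>n. lp_norm (ereal r) (\<lambda>k. fs_inverse_embedded (schroedinger v) n x k - inv_into (lp_space (ereal r)) (schroedinger v) x k)) \<longlongrightarrow> 0) sequentially"
    if x: "x \<in> lp_space (ereal r)" for x
  proof -
    obtain Bx where Bx: "\<And>j. norm (x j) \<le> Bx" using lp_bounded[OF p1 x] by blast
    define y where "y j = norm (x j) powr r" for j
    have ys: "y summable_on UNIV" using x unfolding y_def by (simp add: lp_space_def)
    define T where "T n = infsum (\<lambda>j. min 1 (s4 powr (real n - \<bar>real_of_int j\<bar>)) * y j) UNIV" for n :: nat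
    have T: "T \<longlonglongrightarrow> 0" unfolding T_def by (rule tail_zero[OF _ ys s]) (simp add: y_def)
    define Q where "Q n = (R powr (r - 1) * (R * T n)) powr (1 / r)" for n
    have T0: "T n \<ge> 0" for n unfolding T_def y_def by (rule infsum_nonneg) simp
    have Q: "Q \<longlonglongrightarrow> 0" unfolding Q_def
    proof (rule tendsto_zero_powrI)
      show "(\<lambda>n. R powr (r - 1) * (R * T n)) \<longlonglongrightarrow> 0" using T by (auto intro!: tendsto_mult_right_zero)
      show "\<forall>\<^sub>F n in sequentially. 0 \<le> R powr (r - 1) * (R * T n)" using T0 R0 by simp
    qed (use r in auto)
    have ev: "norm (lp_norm (ereal r) (\<lambda>k. fs_inverse_embedded (schroedinger v) n x k - inv_into (lp_space (ereal r)) (schroedinger v) x k)) \<le> Q n"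
      if n: "n \<ge> N" for n
    proof -
      have D: "Dn n \<noteq> 0" and kK: "kbd B s4 (Kn n)" and kGn: "kbd B s4 (Gn n)" and kG: "kbd B s4 G"
        and Kj: "\<And>i j. \<bar>Kn n i j\<bar> \<le> B * s4 powr \<bar>real_of_int i - real_of_int j\<bar> * s4 powr (real n - \<bar>real_of_int j\<bar>)"
        using NB(2)[OF n] by auto
      have eqz: "(\<lambda>k. fs_inverse_embedded (schroedinger v) n x k - inv_into (lp_space (ereal r)) (schroedinger v) x k) = kop (Kn n) x"
      proof
        fix k
        show "fs_inverse_embedded (schroedinger v) n x k - inv_into (lp_space (ereal r)) (schroedinger v) x k = kop (Kn n) x k"
          unfolding fs_inv_formula[OF D] H_inv_formula[OF p1 x] kop_diff[OF kGn kG Bx] Kn_def ..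
      qed
      define c where "c j = R * min 1 (s4 powr (real n - \<bar>real_of_int j\<bar>))" for j
      have col: "(\<Sum>i\<in>F. \<bar>Kn n i j\<bar>) \<le> c j" if F: "finite F" for j F
      proof -
        have c1: "(\<Sum>i\<in>F. \<bar>Kn n i j\<bar>) \<le> R" unfolding R_def by (rule kbd_col[OF kK F])
        have kb2: "kbd B s4 (\<lambda>i j. B * s4 powr \<bar>real_of_int i - real_of_int j\<bar>)" unfolding kbd_def using s NB(1) by simp
        have "(\<Sum>i\<in>F. \<bar>Kn n i j\<bar>) \<le> (\<Sum>i\<in>F. \<bar>B * s4 powr \<bar>real_of_int i - real_of_int j\<bar>\<bar> * s4 powr (real n - \<bar>real_of_int j\<bar>))"
          by (rule sum_mono) (use Kj NB(1) in simp)
        also have "\<dots> = (\<Sum>i\<in>F. \<bar>B * s4 powr \<bar>real_of_int i - real_of_int j\<bar>\<bar>) * s4 powr (real n - \<bar>real_of_int j\<bar>)"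
          by (simp add: sum_distrib_right)
        also have "\<dots> \<le> R * s4 powr (real n - \<bar>real_of_int j\<bar>)"
          unfolding R_def by (rule mult_right_mono[OF kbd_col[OF kb2 F]]) simp
        finally have c2: "(\<Sum>i\<in>F. \<bar>Kn n i j\<bar>) \<le> R * s4 powr (real n - \<bar>real_of_int j\<bar>)" .
        show ?thesis unfolding c_def using c1 c2 by (simp add: min_def)
      qed
      have cs: "(\<lambda>j. c j * norm (x j) powr r) summable_on UNIV"
      proof (rule summable_on_comparison_test[OF summable_on_cmult_right[OF ys, of R]])
        fix j
        have "c j \<le> R" unfolding c_def using R0 by (simp add: min_def)
        then show "c j * norm (x j) powr r \<le> R * y j" unfolding y_def by (intro mult_right_mono) auto
        show "0 \<le> c j * norm (x j) powr r" unfolding c_def using R0 s by simp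
      qed
      note C = CL[OF r kK Bx col cs]
      have ic: "infsum (\<lambda>j. c j * norm (x j) powr r) UNIV = R * T n"
      proof -
        have "(\<lambda>j. c j * norm (x j) powr r) = (\<lambda>j. R * (min 1 (s4 powr (real n - \<bar>real_of_int j\<bar>)) * y j))"
          unfolding c_def y_def by (simp add: mult.assoc)
        then show ?thesis unfolding T_def by (simp add: infsum_cmult_right')
      qed
      have le: "infsum (\<lambda>i. norm (kop (Kn n) x i) powr r) UNIV \<le> R powr (r - 1) * (R * T n)"
        using C(2) unfolding ic R_def .
      have "lp_norm (ereal r) (kop (Kn n) x) = (infsum (\<lambda>i. norm (kop (Kn n) x i) powr r) UNIV) powr (1 / r)"
        by (simp add: lp_norm_def)
      also have "\<dots> \<le> Q n" unfolding Q_def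
        by (rule powr_mono2) (use le r in \<open>auto intro: infsum_nonneg\<close>)
      finally show ?thesis unfolding eqz by (simp add: lp_norm_def)
    qed
    show ?thesis
      by (rule Lim_null_comparison[OF _ Q]) (use ev in \<open>auto simp: eventually_sequentially\<close>)
  qed
  then show ?thesis unfolding strongly_converges_def by simp
qed

end

context hyp
begin

lemma sc_inf:
  "strongly_converges \<infinity> (fs_inverse_embedded (schroedinger v)) (inv_into (lp_space \<infinity>) (schroedinger v))"
proof -
  obtain N B where NB: "B > 0" "\<And>n. n \<ge> N \<Longrightarrow> Dn n \<noteq> 0 \<and> kbd B s4 (Kn n) \<and> kbd B s4 (Gn n) \<and> kbd B s4 G
   \<and> (\<forall>i j. \<bar>Kn n i j\<bar> \<le> B * s4 powr \<bar>real_of_int i - real_of_int j\<bar> * s4 powr (real n - \<bar>real_of_int i\<bar>))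
   \<and> (\<forall>i j. \<bar>Kn n i j\<bar> \<le> B * s4 powr \<bar>real_of_int i - real_of_int j\<bar> * s4 powr (real n - \<bar>real_of_int j\<bar>))"
    using Kn_facts by blast
  have s: "0 < s4" "s4 < 1" by (rule s4_bounds)+
  have p1: "1 \<le> (\<infinity>::ereal)" by simp
  have main: "\<forall>\<^sub>F n in sequentially. \<forall>x\<in>lp_space \<infinity>. lp_norm \<infinity> x \<le> 1 \<longrightarrow>
            lp_norm \<infinity> (proj m (\<lambda>k. fs_inverse_embedded (schroedinger v) n x k - inv_into (lp_space \<infinity>) (schroedinger v) x k)) \<le> \<epsilon> \<and>
            lp_norm \<infinity> (\<lambda>k. fs_inverse_embedded (schroedinger v) n (proj m x) k - inv_into (lp_space \<infinity>) (schroedinger v) (proj m x) k) \<le> \<epsilon>"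
    if e: "\<epsilon> > 0" for m \<epsilon>
  proof -
    define Z where "Z n = (B * s4 powr (- real m) * (2 / (1 - s4))) * s4 ^ n" for n
    have "Z \<longlonglongrightarrow> (B * s4 powr (- real m) * (2 / (1 - s4))) * 0"
      unfolding Z_def by (intro tendsto_mult tendsto_const LIMSEQ_realpow_zero) (use s in auto)
    then have "\<forall>\<^sub>F n in sequentially. Z n < \<epsilon>" using e by (intro order_tendstoD(2)) auto
    moreover have "\<forall>\<^sub>F n in sequentially. n \<ge> N" by (simp add: eventually_ge_at_top)
    ultimately show ?thesis
    proof (rule eventually_elim2)
      fix n assume Zn: "Z n < \<epsilon>" and n: "n \<ge> N"
      have D: "Dn n \<noteq> 0" and kK: "kbd B s4 (Kn n)" and kGn: "kbd B s4 (Gn n)" and kG: "kbd B s4 G"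
        and Ki: "\<And>i j. \<bar>Kn n i j\<bar> \<le> B * s4 powr \<bar>real_of_int i - real_of_int j\<bar> * s4 powr (real n - \<bar>real_of_int i\<bar>)"
        and Kj: "\<And>i j. \<bar>Kn n i j\<bar> \<le> B * s4 powr \<bar>real_of_int i - real_of_int j\<bar> * s4 powr (real n - \<bar>real_of_int j\<bar>)"
        using NB(2)[OF n] by auto
      define A' where "A' = B * s4 powr (real n - real m)"
      have A'0: "A' \<ge> 0" unfolding A'_def using NB(1) by simp
      have sp: "s4 powr (real n - real m) = s4 ^ n * s4 powr (- real m)"
      proof -
        have "s4 powr (real n - real m) = s4 powr (real n) * s4 powr (- real m)"
          using powr_add[of s4 "real n" "- real m"] by simp
        also have "s4 powr (real n) = s4 ^ n" by (rule powr_realpow[OF s(1)])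
        finally show ?thesis .
      qed
      have ZA: "A' * (2 / (1 - s4)) = Z n"
        unfolding A'_def Z_def sp by (simp only: mult_ac)
      have pmono: "s4 powr (real n - t) \<le> s4 powr (real n - real m)" if "t \<le> real m" for t
        using that s by (intro powr_mono') auto
      have eqz: "(\<lambda>k. fs_inverse_embedded (schroedinger v) n y k - inv_into (lp_space \<infinity>) (schroedinger v) y k) = kop (Kn n) y"
        if y: "y \<in> lp_space \<infinity>" for y
      proof
        obtain By where By: "\<And>j. norm (y j) \<le> By" using lp_bounded[OF p1 y] by blast
        fix k
        show "fs_inverse_embedded (schroedinger v) n y k - inv_into (lp_space \<infinity>) (schroedinger v) y k = kop (Kn n) y k"
          unfolding fs_inv_formula[OF D] H_inv_formula[OF p1 y] kop_diff[OF kGn kG By] Kn_def ..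
      qed
      show "\<forall>x\<in>lp_space \<infinity>. lp_norm \<infinity> x \<le> 1 \<longrightarrow>
            lp_norm \<infinity> (proj m (\<lambda>k. fs_inverse_embedded (schroedinger v) n x k - inv_into (lp_space \<infinity>) (schroedinger v) x k)) \<le> \<epsilon> \<and>
            lp_norm \<infinity> (\<lambda>k. fs_inverse_embedded (schroedinger v) n (proj m x) k - inv_into (lp_space \<infinity>) (schroedinger v) (proj m x) k) \<le> \<epsilon>"
      proof (intro ballI impI conjI)
        fix x assume x: "x \<in> lp_space \<infinity>" and x1: "lp_norm \<infinity> x \<le> 1"
        have xb: "norm (x j) \<le> 1" for j using linf_facts(2)[OF x, of j] x1 by linarith
        have "norm (proj m (kop (Kn n) x) i) \<le> Z n" for i
        proof (cases "\<bar>i\<bar> \<le> int m")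
          case True
          have "norm (kop (Kn n) x i) \<le> A' * (2 / (1 - s4))"
          proof (rule kop_pt[OF kK xb _ A'0])
            fix j
            have "\<bar>Kn n i j\<bar> * norm (x j) \<le> \<bar>Kn n i j\<bar> * 1" using xb[of j] by (intro mult_left_mono) auto
            also have "\<dots> \<le> B * s4 powr \<bar>real_of_int i - real_of_int j\<bar> * s4 powr (real n - \<bar>real_of_int i\<bar>)" using Ki by simp
            also have "\<dots> \<le> B * s4 powr \<bar>real_of_int i - real_of_int j\<bar> * s4 powr (real n - real m)"
              using True NB(1) by (intro mult_left_mono pmono) auto
            finally show "\<bar>Kn n i j\<bar> * norm (x j) \<le> A' * s4 powr \<bar>real_of_int i - real_of_int j\<bar>"
              unfolding A'_def by (simp add: mult_ac)
          qed
          then show ?thesis using True ZA by (simp add: proj_def)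
        next
          case False
          have "Z n \<ge> 0" unfolding Z_def using NB(1) s by simp
          then show ?thesis using False by (simp add: proj_def)
        qed
        then have "lp_norm \<infinity> (proj m (kop (Kn n) x)) \<le> Z n" by (rule lp_norm_inf_le)
        then show "lp_norm \<infinity> (proj m (\<lambda>k. fs_inverse_embedded (schroedinger v) n x k - inv_into (lp_space \<infinity>) (schroedinger v) x k)) \<le> \<epsilon>"
          unfolding eqz[OF x] using Zn by simp
        have pm: "proj m x \<in> lp_space \<infinity>"
        proof -
          have "bounded (range (proj m x))" unfolding bounded_iff proj_def using xb
            by (intro exI[of _ 1]) auto
          then show ?thesis by (simp add: lp_space_def)
        qed
        have pb: "norm (proj m x j) \<le> 1" for j using xb[of j] by (simp add: proj_def)
        have "norm (kop (Kn n) (proj m x) i) \<le> Z n" for i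
        proof -
          have "norm (kop (Kn n) (proj m x) i) \<le> A' * (2 / (1 - s4))"
          proof (rule kop_pt[OF kK pb _ A'0])
            fix j
            show "\<bar>Kn n i j\<bar> * norm (proj m x j) \<le> A' * s4 powr \<bar>real_of_int i - real_of_int j\<bar>"
            proof (cases "\<bar>j\<bar> \<le> int m")
              case True
              have "\<bar>Kn n i j\<bar> * norm (proj m x j) \<le> \<bar>Kn n i j\<bar> * 1" using pb[of j] by (intro mult_left_mono) auto
              also have "\<dots> \<le> B * s4 powr \<bar>real_of_int i - real_of_int j\<bar> * s4 powr (real n - \<bar>real_of_int j\<bar>)" using Kj by simp
              also have "\<dots> \<le> B * s4 powr \<bar>real_of_int i - real_of_int j\<bar> * s4 powr (real n - real m)"
                using True NB(1) by (intro mult_left_mono pmono) auto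
              finally show ?thesis unfolding A'_def by (simp add: mult_ac)
            next
              case False
              then show ?thesis using A'0 by (simp add: proj_def)
            qed
          qed
          then show ?thesis using ZA by simp
        qed
        then have "lp_norm \<infinity> (kop (Kn n) (proj m x)) \<le> Z n" by (rule lp_norm_inf_le)
        then show "lp_norm \<infinity> (\<lambda>k. fs_inverse_embedded (schroedinger v) n (proj m x) k - inv_into (lp_space \<infinity>) (schroedinger v) (proj m x) k) \<le> \<epsilon>"
          unfolding eqz[OF pm] using Zn by simp
      qed
    qed
  qed
  then show ?thesis unfolding strongly_converges_def by simp
qed

lemma sufficiency:
  assumes p: "1 \<le> p"
  shows "fsm_applicable p (schroedinger v)"
proof -
  obtain N B where NB: "B > 0" "\<And>n. n \<ge> N \<Longrightarrow> Dn n \<noteq> 0 \<and> kbd B s4 (Kn n) \<and> kbd B s4 (Gn n) \<and> kbd B s4 G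
   \<and> (\<forall>i j. \<bar>Kn n i j\<bar> \<le> B * s4 powr \<bar>real_of_int i - real_of_int j\<bar> * s4 powr (real n - \<bar>real_of_int i\<bar>))
   \<and> (\<forall>i j. \<bar>Kn n i j\<bar> \<le> B * s4 powr \<bar>real_of_int i - real_of_int j\<bar> * s4 powr (real n - \<bar>real_of_int j\<bar>))"
    using Kn_facts by blast
  have ev: "\<forall>\<^sub>F n in sequentially. fs_invertible (schroedinger v) n"
    unfolding eventually_sequentially using NB(2) fs_inv by blast
  have sc: "strongly_converges p (fs_inverse_embedded (schroedinger v)) (inv_into (lp_space p) (schroedinger v))"
  proof (cases "p = \<infinity>")
    case True then show ?thesis using sc_inf by simp
  next
    case False
    then obtain r where r: "p = ereal r" using p by (cases p) auto
    with p have "r \<ge> 1" by simp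
    then show ?thesis using sc_fin r by simp
  qed
  show ?thesis unfolding fsm_applicable_def using H_inv[OF p] ev sc by blast
qed

end

theorem theorem3p14:
  fixes p :: ereal and v :: "int \<Rightarrow> int" and K :: nat
  assumes "1 \<le> p"
    and "K \<ge> 1"
    and "\<forall>n. v (n + int K) = v n"
  shows "fsm_applicable p (schroedinger v) \<longleftrightarrow> \<bar>trace (monodromy v K 0)\<bar> > 2"
proof -
  interpret per v K using assms(2,3) by unfold_locales
  have tr: "trace (monodromy v K 0) = tr" unfolding tr_def by (rule trace_monodromy)
  show ?thesis
  proof
    assume "fsm_applicable p (schroedinger v)"
    then show "\<bar>trace (monodromy v K 0)\<bar> > 2" using necessity[OF assms(1)] tr by simp
  next
    assume "\<bar>trace (monodromy v K 0)\<bar> > 2"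
    then have "\<bar>tr\<bar> > 2" using tr by simp
    then interpret hyp v K by unfold_locales
    show "fsm_applicable p (schroedinger v)" by (rule sufficiency[OF assms(1)])
  qed
qed

end
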